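(* Let $m\ge1$, $0=c_1<c_2<\cdots<c_m$ be fixed, and for $x\in\mathbb{R}$ let $\vec t=(t_1,\dots,t_m)=(x,c_2+x,\dots,c_m+x)$. Let $\hat\omega_0:=1$ and $\hat\omega_1,\dots,\hat\omega_m\ge0$, let $\omega_k:=\hat\omega_k-\hat\omega_{k-1}$ ($k=1,\dots,m$), and consider the weight $w(s)={\rm e}^{-s^2}\big(1+\sum_{k=1}^m\omega_k\theta(s-t_k)\big)$ on $\mathbb{R}$. Let $n\ge1$, and let $a_k(x),b_k(x)$ ($k=1,\dots,m$) be the functions defined in the context from the Lax matrix of the associated Riemann–Hilbert problem. Then for $k=1,\dots,m$, $$R_{n,k}(\vec t)=\frac{a_kb_k^2}{\sum_{j=1}^ma_jb_j+n},\qquad r_{n,k}(\vec t)=a_kb_k,$$ equivalently (when the denominators are nonzero) $$a_k=\frac{r_{n,k}^2}{R_{n,k}\big(\sum_{j=1}^mr_{n,j}+n\big)},\qquad b_k=\frac{R_{n,k}}{r_{n,k}}\Big(\sum_{j=1}^mr_{n,j}+n\Big),$$ and moreover $a_k(x)=\frac12R_{n-1,k}(\vec t)$.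
   Context: $\theta(y)=1$ for $y>0$ and $0$ otherwise. $P_j(z)$ is the monic degree-$j$ polynomial orthogonal w.r.t. $w$ on $\mathbb{R}$, $\int P_jP_kw\,ds=h_k\delta_{jk}$, $h_k>0$. $R_{j,k}:=\omega_k{\rm e}^{-t_k^2}P_j(t_k)^2/h_j$ and $r_{n,k}:=\omega_k{\rm e}^{-t_k^2}P_n(t_k)P_{n-1}(t_k)/h_{n-1}$. Define for $z\notin\mathbb{R}$ the $2\times2$ matrix $$Y(z)=\begin{pmatrix}P_n(z)&\frac{1}{2\pi i}\int_{\mathbb{R}}\frac{P_n(s)w(s)}{s-z}ds\\ -\frac{2\pi i}{h_{n-1}}P_{n-1}(z)&-\frac{1}{h_{n-1}}\int_{\mathbb{R}}\frac{P_{n-1}(s)w(s)}{s-z}ds\end{pmatrix},$$ and $\Phi(z;x):=\sigma_1{\rm e}^{\frac{x^2}{2}\sigma_3}Y(z+x){\rm e}^{-\frac12(z+x)^2\sigma_3}\sigma_1$, where $\sigma_1=\begin{pmatrix}0&1\\1&0\end{pmatrix}$, $\sigma_3=\begin{pmatrix}1&0\\0&-1\end{pmatrix}$. It is known that $\Phi$ satisfies $\partial_z\Phi=A(z;x)\Phi$ with $$A(z;x)=(z+x)\sigma_3+A_\infty(x)+\sum_{k=1}^m\frac{A_k(x)}{z-c_k},$$ $$A_\infty=\begin{pmatrix}0&y\\-2\big(\sum_{k}a_kb_k+n\big)/y&0\end{pmatrix},\qquad A_k=\begin{pmatrix}a_kb_k&a_ky\\-a_kb_k^2/y&-a_kb_k\end{pmatrix},$$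 for scalar functions $y(x)$, $a_k(x)$, $b_k(x)$; these define $a_k,b_k$ (namely $y=(A_\infty)_{12}$, $a_k=(A_k)_{12}/y$, $a_kb_k=(A_k)_{11}$). *)

theory Defs
  imports "HOL-Analysis.Analysis" "HOL-Computational_Algebra.Polynomial"
begin

definition theta :: "real \<Rightarrow> real" where
  "theta y = (if y > 0 then 1 else 0)"

definition tpt :: "(nat \<Rightarrow> real) \<Rightarrow> real \<Rightarrow> nat \<Rightarrow> real" where
  "tpt c x k = c k + x"

definition jump :: "(nat \<Rightarrow> real) \<Rightarrow> nat \<Rightarrow> real" where
  "jump wh k = wh k - wh (k - 1)"

definition weight :: "nat \<Rightarrow> (nat \<Rightarrow> real) \<Rightarrow> (nat \<Rightarrow> real) \<Rightarrow> real \<Rightarrow> real \<Rightarrow> real" where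
  "weight m c wh x s = exp (- s\<^sup>2) * (1 + (\<Sum>k=1..m. jump wh k * theta (s - tpt c x k)))"

definition OP :: "(real \<Rightarrow> real) \<Rightarrow> nat \<Rightarrow> real poly" where
  "OP w j = (THE p. degree p = j \<and> lead_coeff p = 1 \<and>
      (\<forall>i<j. (\<lambda>s. poly p s * s ^ i * w s) \<in> borel_measurable lborel \<and>
             integrable lborel (\<lambda>s. poly p s * s ^ i * w s) \<and>
             (LINT s|lborel. poly p s * s ^ i * w s) = 0))"

definition hnorm :: "(real \<Rightarrow> real) \<Rightarrow> nat \<Rightarrow> real" where
  "hnorm w j = (LINT s|lborel. (poly (OP w j) s)\<^sup>2 * w s)"

definition cpoly :: "real poly \<Rightarrow> complex \<Rightarrow> complex" where
  "cpoly p z = poly (map_poly complex_of_real p) z"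

definition RR :: "nat \<Rightarrow> (nat \<Rightarrow> real) \<Rightarrow> (nat \<Rightarrow> real) \<Rightarrow> real \<Rightarrow> nat \<Rightarrow> nat \<Rightarrow> real" where
  "RR m c wh x j k = (let w = weight m c wh x; t = tpt c x k in
     jump wh k * exp (- t\<^sup>2) * (poly (OP w j) t)\<^sup>2 / hnorm w j)"

definition rr :: "nat \<Rightarrow> (nat \<Rightarrow> real) \<Rightarrow> (nat \<Rightarrow> real) \<Rightarrow> real \<Rightarrow> nat \<Rightarrow> nat \<Rightarrow> real" where
  "rr m c wh x n k = (let w = weight m c wh x; t = tpt c x k in
     jump wh k * exp (- t\<^sup>2) * poly (OP w n) t * poly (OP w (n - 1)) t / hnorm w (n - 1))"

definition mat2 :: "complex \<Rightarrow> complex \<Rightarrow> complex \<Rightarrow> complex \<Rightarrow> complex^2^2" where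
  "mat2 a b c d = (\<chi> i j. if i = 1 then (if j = 1 then a else b) else (if j = 1 then c else d))"

definition sigma1 :: "complex^2^2" where "sigma1 = mat2 0 1 1 0"

text \<open>exp(alpha sigma_3) = diag(exp alpha, exp(-alpha)).\<close>
definition expsig3 :: "complex \<Rightarrow> complex^2^2" where
  "expsig3 \<alpha> = mat2 (exp \<alpha>) 0 0 (exp (- \<alpha>))"

definition cauchyT :: "(real \<Rightarrow> real) \<Rightarrow> real poly \<Rightarrow> complex \<Rightarrow> complex" where
  "cauchyT w p z = (LINT s|lborel. complex_of_real (poly p s * w s) / (complex_of_real s - z))"

definition Ymat :: "(real \<Rightarrow> real) \<Rightarrow> nat \<Rightarrow> complex \<Rightarrow> complex^2^2" where
  "Ymat w n z = mat2
     (cpoly (OP w n) z)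
     (cauchyT w (OP w n) z / (2 * pi * \<i>))
     (- (2 * pi * \<i>) / complex_of_real (hnorm w (n - 1)) * cpoly (OP w (n - 1)) z)
     (- cauchyT w (OP w (n - 1)) z / complex_of_real (hnorm w (n - 1)))"

definition Phi :: "nat \<Rightarrow> (nat \<Rightarrow> real) \<Rightarrow> (nat \<Rightarrow> real) \<Rightarrow> nat \<Rightarrow> complex \<Rightarrow> real \<Rightarrow> complex^2^2" where
  "Phi m c wh n z x =
     sigma1 ** expsig3 (complex_of_real (x\<^sup>2 / 2)) **
     Ymat (weight m c wh x) n (z + complex_of_real x) **
     expsig3 (- (z + complex_of_real x)\<^sup>2 / 2) ** sigma1"

definition Alax :: "nat \<Rightarrow> (nat \<Rightarrow> real) \<Rightarrow> nat \<Rightarrow> complex \<Rightarrow> (nat \<Rightarrow> complex) \<Rightarrow> (nat \<Rightarrow> complex)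
     \<Rightarrow> complex \<Rightarrow> real \<Rightarrow> complex^2^2" where
  "Alax m c n y a b z x =
     mat2 (z + complex_of_real x) 0 0 (- (z + complex_of_real x))
     + mat2 0 y (- 2 * ((\<Sum>k=1..m. a k * b k) + of_nat n) / y) 0
     + (\<Sum>k=1..m. mat2 (a k * b k / (z - complex_of_real (c k))) (a k * y / (z - complex_of_real (c k)))
               (- a k * (b k)\<^sup>2 / y / (z - complex_of_real (c k))) (- a k * b k / (z - complex_of_real (c k))))"

end

theory Submission
  imports Defs "HOL-Probability.Distributions"
begin

lemma integrable_gauss_pow: "integrable lborel (\<lambda>s::real. s^k * exp (- s\<^sup>2))"
proof -
  have i: "integrable lborel (\<lambda>x. normal_density 0 (1/sqrt 2) x * x^k)"
    using integrable_normal_moment[of "1/sqrt 2" 0 k] by simp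
  have eq: "(\<lambda>x. sqrt pi * (normal_density 0 (1/sqrt 2) x * x^k)) = (\<lambda>s::real. s^k * exp (- s\<^sup>2))"
    by (auto simp: normal_density_def power2_eq_square real_sqrt_mult)
  have "integrable lborel (\<lambda>x. sqrt pi * (normal_density 0 (1/sqrt 2) x * x^k))"
    using i by (rule integrable_mult_right)
  then show ?thesis unfolding eq .
qed

lemma integrable_poly_gauss: "integrable lborel (\<lambda>s::real. poly P s * exp (- s\<^sup>2))"
proof -
  have "(\<lambda>s. poly P s * exp (- s\<^sup>2)) = (\<lambda>s. \<Sum>i\<le>degree P. coeff P i * (s^i * exp (- s\<^sup>2)))"
    by (auto simp: poly_altdef sum_distrib_right mult.assoc)
  then show ?thesis using integrable_gauss_pow by (auto intro!: integrable_sum integrable_mult_right)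
qed


locale wt =
  fixes w :: "real \<Rightarrow> real" and B x0 :: real
  assumes w_meas: "w \<in> borel_measurable lborel"
    and w_bound: "\<And>s. \<bar>w s\<bar> \<le> B * exp (- s\<^sup>2)"
    and w_nonneg: "\<And>s. 0 \<le> w s"
    and w_pos: "\<And>s. s < x0 \<Longrightarrow> 0 < w s"
begin

lemma meas_poly[measurable]: "poly (P::real poly) \<in> borel_measurable borel"
  using continuous_on_poly[OF continuous_on_id, of UNIV P]
  by (intro borel_measurable_continuous_onI) (simp add: id_def)

lemma meas_w[measurable]: "w \<in> borel_measurable borel"
  using w_meas by simp

lemma B_nonneg: "0 \<le> B"
proof -
  have "0 \<le> B * exp (- 0\<^sup>2)" using w_bound[of 0] by linarith
  then show ?thesis by simp
qed

lemma int_pw: "integrable lborel (\<lambda>s. poly P s * w s)"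
proof (rule Bochner_Integration.integrable_bound[where f="\<lambda>s. B * \<bar>poly P s * exp (- s\<^sup>2)\<bar>"])
  show "integrable lborel (\<lambda>s. B * \<bar>poly P s * exp (- s\<^sup>2)\<bar>)"
    using integrable_poly_gauss[of P] by (intro integrable_mult_right integrable_abs)
  show "(\<lambda>s. poly P s * w s) \<in> borel_measurable lborel" using w_meas by measurable
  show "AE s in lborel. norm (poly P s * w s) \<le> norm (B * \<bar>poly P s * exp (- s\<^sup>2)\<bar>)"
  proof (intro AE_I2)
    fix s
    have "\<bar>poly P s * w s\<bar> = \<bar>poly P s\<bar> * \<bar>w s\<bar>" by (simp add: abs_mult)
    also have "\<dots> \<le> \<bar>poly P s\<bar> * (B * exp (- s\<^sup>2))" using w_bound[of s] by (intro mult_left_mono) auto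
    also have "\<dots> = \<bar>B * \<bar>poly P s * exp (- s\<^sup>2)\<bar>\<bar>" using B_nonneg by (simp add: abs_mult)
    finally show "norm (poly P s * w s) \<le> norm (B * \<bar>poly P s * exp (- s\<^sup>2)\<bar>)" by simp
  qed
qed

lemma int_ppw: "integrable lborel (\<lambda>s. poly P s * poly Q s * w s)"
  using int_pw[of "P * Q"] by simp

lemma int_psw: "integrable lborel (\<lambda>s. poly P s * s ^ i * w s)"
  using int_pw[of "P * monom 1 i"] by (simp add: poly_monom)

definition ipm :: "real poly \<Rightarrow> nat \<Rightarrow> real" where
  "ipm p i = (LINT s|lborel. poly p s * s ^ i * w s)"

definition ip :: "real poly \<Rightarrow> real poly \<Rightarrow> real" where
  "ip p r = (LINT s|lborel. poly p s * poly r s * w s)"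

lemma ip_expand: "ip p r = (\<Sum>i\<le>degree r. coeff r i * ipm p i)"
proof -
  have "ip p r = (LINT s|lborel. (\<Sum>i\<le>degree r. coeff r i * (poly p s * s ^ i * w s)))"
    unfolding ip_def by (intro Bochner_Integration.integral_cong) (auto simp: poly_altdef[of r] sum_distrib_left sum_distrib_right mult_ac)
  also have "\<dots> = (\<Sum>i\<le>degree r. LINT s|lborel. coeff r i * (poly p s * s ^ i * w s))"
    by (rule Bochner_Integration.integral_sum) (auto intro!: integrable_mult_right int_psw)
  also have "\<dots> = (\<Sum>i\<le>degree r. coeff r i * ipm p i)"
    unfolding ipm_def by simp
  finally show ?thesis .
qed

lemma ip_sym: "ip p r = ip r p"
  unfolding ip_def by (simp add: mult_ac)

lemma ip_diff: "ip (p - q) r = ip p r - ip q r"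
  unfolding ip_def using int_ppw[of p r] int_ppw[of q r]
  by (simp add: left_diff_distrib)

lemma ip_smult: "ip (smult a p) r = a * ip p r"
  unfolding ip_def by (simp add: mult_ac)

lemma ip_add: "ip (p + q) r = ip p r + ip q r"
  unfolding ip_def using int_ppw[of p r] int_ppw[of q r]
  by (simp add: distrib_right)

lemma ip_sum: "ip (\<Sum>i\<in>A. f i) r = (\<Sum>i\<in>A. ip (f i) r)"
proof (induction A rule: infinite_finite_induct)
  case (infinite A) then show ?case by (simp add: ip_def)
next
  case empty then show ?case by (simp add: ip_def)
next
  case (insert a A) then show ?case by (simp add: ip_add)
qed

lemma ipm_ip: "ipm p i = ip p (monom 1 i)"
  unfolding ipm_def ip_def by (simp add: poly_monom)

definition orth :: "nat \<Rightarrow> real poly \<Rightarrow> bool" where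
  "orth j p \<longleftrightarrow> (\<forall>i<j. ipm p i = 0)"

lemma orth_ip: "orth j p \<Longrightarrow> degree r < j \<Longrightarrow> ip p r = 0"
  unfolding orth_def ip_expand by (intro sum.neutral) auto

lemma ip_self_nonneg: "0 \<le> ip r r"
  unfolding ip_def using w_nonneg by (intro Bochner_Integration.integral_nonneg) auto

lemma ip_pos: assumes "r \<noteq> 0" shows "0 < ip r r"
proof (rule ccontr)
  assume "\<not> 0 < ip r r"
  then have "ip r r = 0" using ip_self_nonneg[of r] by linarith
  then have "AE s in lborel. poly r s * poly r s * w s = 0"
    unfolding ip_def using int_ppw[of r r] w_nonneg
    by (subst (asm) integral_nonneg_eq_0_iff_AE) auto
  moreover have "AE s in lborel. \<forall>z\<in>{z. poly r z = 0}. s \<noteq> z"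
    using poly_roots_finite[OF assms] by (intro AE_finite_allI) (auto intro: AE_lborel_singleton)
  ultimately have "AE s in lborel. s \<notin> {x0 - 1<..<x0}"
  proof eventually_elim
    case (elim s)
    show ?case
    proof
      assume s: "s \<in> {x0 - 1<..<x0}"
      then have "0 < w s" using w_pos by auto
      moreover have "poly r s \<noteq> 0" using elim(2) by auto
      ultimately have "poly r s * poly r s * w s \<noteq> 0" by simp
      then show False using elim(1) by simp
    qed
  qed
  then have "{x0 - 1<..<x0} \<in> null_sets lborel"
    by (subst AE_iff_null_sets) auto
  then show False by (simp add: null_sets_def)
qed

lemma monic_exists: "\<exists>p. degree p = j \<and> lead_coeff p = 1 \<and> orth j p"
proof (induction j rule: less_induct)
  case (less j)
  then obtain P where P: "\<And>i. i < j \<Longrightarrow> degree (P i) = i \<and> lead_coeff (P i) = 1 \<and> orth i (P i)"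
    by metis
  have Pnz: "P i \<noteq> 0" if "i < j" for i using P[OF that] by auto
  have Porth: "ip (P i) (P l) = 0" if "i < j" "l < j" "i \<noteq> l" for i l
  proof (cases "l < i")
    case True then show ?thesis using P[OF that(1)] P[OF that(2)] by (intro orth_ip) auto
  next
    case False then have "i < l" using that by auto
    then show ?thesis using P[OF that(1)] P[OF that(2)] ip_sym by (metis orth_ip)
  qed
  define S where "S = (\<Sum>i<j. smult (ip (monom 1 j) (P i) / ip (P i) (P i)) (P i))"
  define p where "p = monom 1 j - S"
  have degS: "degree S < j \<or> S = 0"
  proof (cases j)
    case 0 then show ?thesis by (simp add: S_def)
  next
    case (Suc j')
    have "degree S \<le> j'" unfolding S_def
      by (intro degree_sum_le) (use P Suc in \<open>auto intro: order.trans[OF degree_smult_le]\<close>)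
    then show ?thesis using Suc by auto
  qed
  have coeffS: "coeff S j = 0" using degS by (auto intro: coeff_eq_0)
  have degp: "degree p = j" and lcp: "lead_coeff p = 1"
  proof -
    have "degree (monom (1::real) j + - S) = j"
    proof (cases "S = 0")
      case True then show ?thesis by (simp add: degree_monom_eq)
    next
      case False then show ?thesis using degS by (subst degree_add_eq_left) (auto simp: degree_monom_eq)
    qed
    then show "degree p = j" by (simp add: p_def)
    then show "lead_coeff p = 1" by (simp add: p_def coeffS)
  qed
  have orthP: "ip p (P l) = 0" if "l < j" for l
  proof -
    have "ip S (P l) = (\<Sum>i<j. (ip (monom 1 j) (P i) / ip (P i) (P i)) * ip (P i) (P l))"
      unfolding S_def by (simp add: ip_sum ip_smult)
    also have "\<dots> = (ip (monom 1 j) (P l) / ip (P l) (P l)) * ip (P l) (P l)"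
      using that by (subst sum.remove[of _ l]) (auto simp: Porth intro!: sum.neutral)
    also have "\<dots> = ip (monom 1 j) (P l)" using ip_pos[OF Pnz[OF that]] by simp
    finally show ?thesis unfolding p_def by (simp add: ip_diff)
  qed
  have orthR: "ip p r = 0" if "degree r < j" for r
    using that
  proof (induction "degree r" arbitrary: r rule: less_induct)
    case less
    define d where "d = degree r"
    define r' where "r' = r - smult (lead_coeff r) (P d)"
    have Pd: "degree (P d) = d" "lead_coeff (P d) = 1" using P[of d] less.prems d_def by auto
    have "ip p r' = 0"
    proof (cases "r' = 0")
      case True then show ?thesis by (simp add: ip_def)
    next
      case False
      have "degree r' \<le> d" unfolding r'_def using Pd d_def
        by (intro degree_diff_le) (auto intro: order.trans[OF degree_smult_le])
      moreover have "coeff r' d = 0" unfolding r'_def using Pd d_def by simp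
      ultimately have "degree r' < d"
        using False by (metis le_neq_implies_less leading_coeff_0_iff)
      then show ?thesis using less d_def by auto
    qed
    moreover have "ip p (P d) = 0" using orthP less.prems d_def by auto
    moreover have "r = r' + smult (lead_coeff r) (P d)" unfolding r'_def by simp
    ultimately show ?case by (metis ip_sym ip_add ip_smult mult_zero_right add_0)
  qed
  have "orth j p" unfolding orth_def ipm_ip
    using orthR by (simp add: degree_monom_eq)
  then show ?case using degp lcp by blast
qed

end

context wt begin

definition OPpred :: "nat \<Rightarrow> real poly \<Rightarrow> bool" where
  "OPpred j p \<longleftrightarrow> degree p = j \<and> lead_coeff p = 1 \<and>
      (\<forall>i<j. (\<lambda>s. poly p s * s ^ i * w s) \<in> borel_measurable lborel \<and>
             integrable lborel (\<lambda>s. poly p s * s ^ i * w s) \<and>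
             (LINT s|lborel. poly p s * s ^ i * w s) = 0)"

lemma OPpred_iff: "OPpred j p \<longleftrightarrow> degree p = j \<and> lead_coeff p = 1 \<and> orth j p"
  unfolding OPpred_def orth_def ipm_def using int_psw by auto

lemma ipm_diff: "ipm (p - q) i = ipm p i - ipm q i"
  unfolding ipm_def using int_psw[of p i] int_psw[of q i] by (simp add: left_diff_distrib)

lemma OP_unique: assumes "OPpred j p" "OPpred j q" shows "p = q"
proof (rule ccontr)
  assume ne: "p \<noteq> q"
  define d where "d = p - q"
  have dnz: "d \<noteq> 0" using ne by (simp add: d_def)
  have o: "orth j d" using assms unfolding OPpred_iff orth_def d_def by (simp add: ipm_diff)
  have "degree d \<le> j" using assms unfolding OPpred_iff d_def by (metis degree_diff_le order.refl)
  moreover have "coeff p j = 1" "coeff q j = 1" using assms unfolding OPpred_iff by metis+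
  then have "coeff d j = 0" unfolding d_def by simp
  ultimately have "degree d < j" using dnz by (metis le_neq_implies_less leading_coeff_0_iff)
  then have "ip d d = 0" using o orth_ip by blast
  then show False using ip_pos[OF dnz] by simp
qed

lemma OP_pred: "OPpred j (OP w j)"
proof -
  obtain p where p: "degree p = j \<and> lead_coeff p = 1 \<and> orth j p" using monic_exists by blast
  then have "OPpred j p" unfolding OPpred_iff by blast
  have "OP w j = (THE p. OPpred j p)" unfolding OP_def OPpred_def by simp
  also have "\<dots> = p" using \<open>OPpred j p\<close> OP_unique by blast
  finally show ?thesis using \<open>OPpred j p\<close> by simp
qed

lemma OP_deg: "degree (OP w j) = j" and OP_lc: "lead_coeff (OP w j) = 1" and OP_orth: "orth j (OP w j)"
  using OP_pred[of j] by (auto simp: OPpred_iff)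

lemma OP_nz: "OP w j \<noteq> 0" using OP_lc[of j] by auto

lemma hnorm_ip: "hnorm w j = ip (OP w j) (OP w j)"
  unfolding hnorm_def ip_def by (simp add: power2_eq_square)

lemma hnorm_pos: "0 < hnorm w j"
  using ip_pos[OF OP_nz] hnorm_ip by simp

lemma ipm_OP_self: "ipm (OP w j) j = hnorm w j"
proof -
  have "hnorm w j = (\<Sum>i\<le>j. coeff (OP w j) i * ipm (OP w j) i)"
    unfolding hnorm_ip ip_expand OP_deg ..
  also have "\<dots> = coeff (OP w j) j * ipm (OP w j) j"
    using OP_orth[of j] unfolding orth_def by (subst sum.remove[of _ j]) (auto intro!: sum.neutral)
  also have "\<dots> = ipm (OP w j) j" using OP_lc[of j] by (simp add: OP_deg)
  finally show ?thesis by simp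
qed

lemma ipm_OP_zero: "i < j \<Longrightarrow> ipm (OP w j) i = 0"
  using OP_orth[of j] unfolding orth_def by auto

lemma ipm_monom: "ipm (monom 1 d * p) i = ipm p (d + i)"
  unfolding ipm_def by (simp add: poly_monom power_add mult_ac)

lemma int_pw_abs: "integrable lborel (\<lambda>s. \<bar>poly P s * w s\<bar>)"
  using int_pw by (rule integrable_abs)

lemma norm_s_minus: "\<bar>Im \<zeta>\<bar> \<le> cmod (complex_of_real s - \<zeta>)"
  using abs_Im_le_cmod[of "complex_of_real s - \<zeta>"] by simp

lemma meas_CT[measurable]: "(\<lambda>s. complex_of_real (poly P s * w s) / (complex_of_real s - \<zeta>)) \<in> borel_measurable lborel"
  by measurable

lemma meas_DT[measurable]: "(\<lambda>s. complex_of_real (poly P s * w s) / (complex_of_real s - \<zeta>)^2) \<in> borel_measurable lborel"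
  by measurable

lemma CT_int: assumes "Im \<zeta> \<noteq> 0"
  shows "integrable lborel (\<lambda>s. complex_of_real (poly P s * w s) / (complex_of_real s - \<zeta>))"
proof (rule Bochner_Integration.integrable_bound[where f="\<lambda>s. \<bar>poly P s * w s\<bar> / \<bar>Im \<zeta>\<bar>"])
  show "integrable lborel (\<lambda>s. \<bar>poly P s * w s\<bar> / \<bar>Im \<zeta>\<bar>)"
    using int_pw_abs by (rule integrable_divide_zero)
  show "AE s in lborel. norm (complex_of_real (poly P s * w s) / (complex_of_real s - \<zeta>)) \<le> norm (\<bar>poly P s * w s\<bar> / \<bar>Im \<zeta>\<bar>)"
  proof (intro AE_I2)
    fix s
    have "norm (complex_of_real (poly P s * w s) / (complex_of_real s - \<zeta>)) = \<bar>poly P s * w s\<bar> / cmod (complex_of_real s - \<zeta>)"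
      by (simp add: norm_divide norm_mult abs_mult)
    also have "\<dots> \<le> \<bar>poly P s * w s\<bar> / \<bar>Im \<zeta>\<bar>"
      using norm_s_minus[of \<zeta> s] assms by (intro divide_left_mono) (auto intro!: mult_pos_pos)
    finally show "norm (complex_of_real (poly P s * w s) / (complex_of_real s - \<zeta>)) \<le> norm (\<bar>poly P s * w s\<bar> / \<bar>Im \<zeta>\<bar>)" by simp
  qed
qed simp

end

context wt begin

definition DT :: "real poly \<Rightarrow> complex \<Rightarrow> complex" where
  "DT P \<zeta> = (LINT s|lborel. complex_of_real (poly P s * w s) / (complex_of_real s - \<zeta>)^2)"

lemma s_minus_nz: "Im \<zeta> \<noteq> 0 \<Longrightarrow> complex_of_real s - \<zeta> \<noteq> 0"
  by (auto simp: complex_eq_iff)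

lemma pow_shift: "n < d \<Longrightarrow> (z::complex) * z ^ (d - Suc n) = z ^ (d - n)"
  by (metis Suc_diff_Suc power_Suc)

lemma DT_int: assumes "Im \<zeta> \<noteq> 0"
  shows "integrable lborel (\<lambda>s. complex_of_real (poly P s * w s) / (complex_of_real s - \<zeta>)^2)"
proof (rule Bochner_Integration.integrable_bound[where f="\<lambda>s. \<bar>poly P s * w s\<bar> / \<bar>Im \<zeta>\<bar>^2"])
  show "integrable lborel (\<lambda>s. \<bar>poly P s * w s\<bar> / \<bar>Im \<zeta>\<bar>^2)"
    using int_pw_abs by (rule integrable_divide_zero)
  show "AE s in lborel. norm (complex_of_real (poly P s * w s) / (complex_of_real s - \<zeta>)^2) \<le> norm (\<bar>poly P s * w s\<bar> / \<bar>Im \<zeta>\<bar>^2)"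
  proof (intro AE_I2)
    fix s
    have "norm (complex_of_real (poly P s * w s) / (complex_of_real s - \<zeta>)^2) = \<bar>poly P s * w s\<bar> / cmod (complex_of_real s - \<zeta>)^2"
      by (simp add: norm_divide norm_mult abs_mult norm_power)
    also have "\<dots> \<le> \<bar>poly P s * w s\<bar> / \<bar>Im \<zeta>\<bar>^2"
      using norm_s_minus[of \<zeta> s] assms
      by (intro divide_left_mono power_mono mult_pos_pos) auto
    finally show "norm (complex_of_real (poly P s * w s) / (complex_of_real s - \<zeta>)^2) \<le> norm (\<bar>poly P s * w s\<bar> / \<bar>Im \<zeta>\<bar>^2)" by simp
  qed
qed simp

lemma int_of_real_pw: "integrable lborel (\<lambda>s. complex_of_real (poly P s * w s))"
  using int_pw by (rule integrable_of_real)

lemma CT_shift: assumes "Im \<zeta> \<noteq> 0"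
  shows "\<zeta> * cauchyT w P \<zeta> = cauchyT w (pCons 0 P) \<zeta> - complex_of_real (LINT s|lborel. poly P s * w s)"
proof -
  have "\<zeta> * cauchyT w P \<zeta> = (CLINT s|lborel. \<zeta> * (complex_of_real (poly P s * w s) / (complex_of_real s - \<zeta>)))"
    unfolding cauchyT_def by (rule integral_mult_right_zero[symmetric])
  also have "\<dots> = (CLINT s|lborel. complex_of_real (poly (pCons 0 P) s * w s) / (complex_of_real s - \<zeta>) - complex_of_real (poly P s * w s))"
  proof (intro Bochner_Integration.integral_cong refl)
    fix s
    have nz: "complex_of_real s - \<zeta> \<noteq> 0" using s_minus_nz[OF assms] .
    show "\<zeta> * (complex_of_real (poly P s * w s) / (complex_of_real s - \<zeta>)) = complex_of_real (poly (pCons 0 P) s * w s) / (complex_of_real s - \<zeta>) - complex_of_real (poly P s * w s)"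
      using nz by (simp add: field_simps)
  qed
  also have "\<dots> = cauchyT w (pCons 0 P) \<zeta> - (CLINT s|lborel. complex_of_real (poly P s * w s))"
    unfolding cauchyT_def by (rule Bochner_Integration.integral_diff[OF CT_int[OF assms] int_of_real_pw])
  finally show ?thesis by (simp only: integral_complex_of_real)
qed

lemma aux_id: "(u::complex) \<noteq> 0 \<Longrightarrow> (a - u) * (g / u^2) = a * g / u^2 - g / u"
  by (simp add: field_simps power2_eq_square)

lemma DT_shift: assumes "Im \<zeta> \<noteq> 0"
  shows "\<zeta> * DT P \<zeta> = DT (pCons 0 P) \<zeta> - cauchyT w P \<zeta>"
proof -
  have "\<zeta> * DT P \<zeta> = (CLINT s|lborel. \<zeta> * (complex_of_real (poly P s * w s) / (complex_of_real s - \<zeta>)^2))"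
    unfolding DT_def by (rule integral_mult_right_zero[symmetric])
  also have "\<dots> = (CLINT s|lborel. complex_of_real (poly (pCons 0 P) s * w s) / (complex_of_real s - \<zeta>)^2 - complex_of_real (poly P s * w s) / (complex_of_real s - \<zeta>))"
  proof (intro Bochner_Integration.integral_cong refl)
    fix s
    have nz: "complex_of_real s - \<zeta> \<noteq> 0" using s_minus_nz[OF assms] .
    define G where "G = complex_of_real (poly P s * w s)"
    define U where "U = complex_of_real s - \<zeta>"
    have e: "complex_of_real (poly (pCons 0 P) s * w s) = complex_of_real s * G" by (simp add: G_def)
    have "\<zeta> * (G / U^2) = (complex_of_real s - U) * (G / U^2)" by (simp add: U_def)
    also have "\<dots> = complex_of_real s * G / U^2 - G / U" using nz unfolding U_def by (rule aux_id)
    finally show "\<zeta> * (complex_of_real (poly P s * w s) / (complex_of_real s - \<zeta>)^2) = complex_of_real (poly (pCons 0 P) s * w s) / (complex_of_real s - \<zeta>)^2 - complex_of_real (poly P s * w s) / (complex_of_real s - \<zeta>)"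
      unfolding e G_def U_def .
  qed
  also have "\<dots> = DT (pCons 0 P) \<zeta> - cauchyT w P \<zeta>"
    unfolding cauchyT_def DT_def by (rule Bochner_Integration.integral_diff[OF DT_int[OF assms] CT_int[OF assms]])
  finally show ?thesis .
qed

lemma pCons_monom: "pCons 0 (monom 1 d * P) = monom 1 (Suc d) * (P::real poly)"
  by (metis monom_Suc mult_pCons_left smult_0_left add_0 mult.commute)

lemma CT_pow: assumes "Im \<zeta> \<noteq> 0"
  shows "\<zeta>^d * cauchyT w P \<zeta> = cauchyT w (monom 1 d * P) \<zeta> - (\<Sum>i<d. \<zeta>^(d - 1 - i) * complex_of_real (ipm P i))"
proof (induction d)
  case 0 then show ?case by simp
next
  case (Suc d)
  have "\<zeta>^Suc d * cauchyT w P \<zeta> = \<zeta> * (\<zeta>^d * cauchyT w P \<zeta>)" by simp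
  also have "\<dots> = \<zeta> * cauchyT w (monom 1 d * P) \<zeta> - (\<Sum>i<d. \<zeta>^(Suc d - 1 - i) * complex_of_real (ipm P i))"
    unfolding Suc right_diff_distrib sum_distrib_left
    by (intro arg_cong2[where f="(-)"] refl sum.cong) (auto simp: pow_shift mult.assoc[symmetric])
  also have "\<zeta> * cauchyT w (monom 1 d * P) \<zeta> = cauchyT w (monom 1 (Suc d) * P) \<zeta> - complex_of_real (ipm P d)"
    unfolding CT_shift[OF assms] pCons_monom ipm_def by (simp add: poly_monom mult_ac)
  finally show ?case by (simp add: algebra_simps)
qed

lemma DT_pow: assumes "Im \<zeta> \<noteq> 0"
  shows "\<zeta>^d * DT P \<zeta> = DT (monom 1 d * P) \<zeta> - (\<Sum>i<d. \<zeta>^(d - 1 - i) * cauchyT w (monom 1 i * P) \<zeta>)"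
proof (induction d)
  case 0 then show ?case by simp
next
  case (Suc d)
  have "\<zeta>^Suc d * DT P \<zeta> = \<zeta> * (\<zeta>^d * DT P \<zeta>)" by simp
  also have "\<dots> = \<zeta> * DT (monom 1 d * P) \<zeta> - (\<Sum>i<d. \<zeta>^(Suc d - 1 - i) * cauchyT w (monom 1 i * P) \<zeta>)"
    unfolding Suc right_diff_distrib sum_distrib_left
    by (intro arg_cong2[where f="(-)"] refl sum.cong) (auto simp: pow_shift mult.assoc[symmetric])
  also have "\<zeta> * DT (monom 1 d * P) \<zeta> = DT (monom 1 (Suc d) * P) \<zeta> - cauchyT w (monom 1 d * P) \<zeta>"
    unfolding DT_shift[OF assms] pCons_monom ..
  finally show ?case by (simp add: algebra_simps)
qed

definition Ng :: "real poly \<Rightarrow> real" where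
  "Ng P = (LINT s|lborel. \<bar>poly P s * w s\<bar>)"

lemma CT_bound: assumes "Im \<zeta> \<noteq> 0"
  shows "cmod (cauchyT w P \<zeta>) \<le> Ng P / \<bar>Im \<zeta>\<bar>"
proof -
  have "cmod (cauchyT w P \<zeta>) \<le> (LINT s|lborel. norm (complex_of_real (poly P s * w s) / (complex_of_real s - \<zeta>)))"
    unfolding cauchyT_def by (rule integral_norm_bound)
  also have "\<dots> \<le> (LINT s|lborel. \<bar>poly P s * w s\<bar> / \<bar>Im \<zeta>\<bar>)"
  proof (rule integral_mono)
    show "integrable lborel (\<lambda>s. norm (complex_of_real (poly P s * w s) / (complex_of_real s - \<zeta>)))"
      using CT_int[OF assms] by (rule integrable_norm)
    show "integrable lborel (\<lambda>s. \<bar>poly P s * w s\<bar> / \<bar>Im \<zeta>\<bar>)"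
      using int_pw_abs by (rule integrable_divide_zero)
    fix s
    have "norm (complex_of_real (poly P s * w s) / (complex_of_real s - \<zeta>)) = \<bar>poly P s * w s\<bar> / cmod (complex_of_real s - \<zeta>)"
      by (simp add: norm_divide norm_mult abs_mult)
    also have "\<dots> \<le> \<bar>poly P s * w s\<bar> / \<bar>Im \<zeta>\<bar>"
      using norm_s_minus[of \<zeta> s] assms by (intro divide_left_mono) (auto intro!: mult_pos_pos)
    finally show "norm (complex_of_real (poly P s * w s) / (complex_of_real s - \<zeta>)) \<le> \<bar>poly P s * w s\<bar> / \<bar>Im \<zeta>\<bar>" .
  qed
  finally show ?thesis unfolding Ng_def by simp
qed

lemma DT_bound: assumes "Im \<zeta> \<noteq> 0"
  shows "cmod (DT P \<zeta>) \<le> Ng P / \<bar>Im \<zeta>\<bar>^2"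
proof -
  have "cmod (DT P \<zeta>) \<le> (LINT s|lborel. norm (complex_of_real (poly P s * w s) / (complex_of_real s - \<zeta>)^2))"
    unfolding DT_def by (rule integral_norm_bound)
  also have "\<dots> \<le> (LINT s|lborel. \<bar>poly P s * w s\<bar> / \<bar>Im \<zeta>\<bar>^2)"
  proof (rule integral_mono)
    show "integrable lborel (\<lambda>s. norm (complex_of_real (poly P s * w s) / (complex_of_real s - \<zeta>)^2))"
      using DT_int[OF assms] by (rule integrable_norm)
    show "integrable lborel (\<lambda>s. \<bar>poly P s * w s\<bar> / \<bar>Im \<zeta>\<bar>^2)"
      using int_pw_abs by (rule integrable_divide_zero)
    fix s
    have "norm (complex_of_real (poly P s * w s) / (complex_of_real s - \<zeta>)^2) = \<bar>poly P s * w s\<bar> / cmod (complex_of_real s - \<zeta>)^2"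
      by (simp add: norm_divide norm_mult abs_mult norm_power)
    also have "\<dots> \<le> \<bar>poly P s * w s\<bar> / \<bar>Im \<zeta>\<bar>^2"
      using norm_s_minus[of \<zeta> s] assms by (intro divide_left_mono power_mono) (auto intro!: mult_pos_pos)
    finally show "norm (complex_of_real (poly P s * w s) / (complex_of_real s - \<zeta>)^2) \<le> \<bar>poly P s * w s\<bar> / \<bar>Im \<zeta>\<bar>^2" .
  qed
  finally show ?thesis unfolding Ng_def by simp
qed

end

context wt begin

lemma CT_diffquot:
  assumes "Im \<zeta> \<noteq> 0" "Im (\<zeta> + h) \<noteq> 0" "h \<noteq> 0"
  shows "(cauchyT w P (\<zeta> + h) - cauchyT w P \<zeta>) / h =
     (CLINT s|lborel. complex_of_real (poly P s * w s) / ((complex_of_real s - (\<zeta> + h)) * (complex_of_real s - \<zeta>)))"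
proof -
  have "cauchyT w P (\<zeta> + h) - cauchyT w P \<zeta> =
     (CLINT s|lborel. complex_of_real (poly P s * w s) / (complex_of_real s - (\<zeta> + h)) - complex_of_real (poly P s * w s) / (complex_of_real s - \<zeta>))"
    unfolding cauchyT_def by (rule Bochner_Integration.integral_diff[OF CT_int[OF assms(2)] CT_int[OF assms(1)], symmetric])
  also have "\<dots> = (CLINT s|lborel. h * (complex_of_real (poly P s * w s) / ((complex_of_real s - (\<zeta> + h)) * (complex_of_real s - \<zeta>))))"
  proof (intro Bochner_Integration.integral_cong refl)
    fix s
    have n1: "complex_of_real s - (\<zeta> + h) \<noteq> 0" using s_minus_nz[OF assms(2)] .
    have n2: "complex_of_real s - \<zeta> \<noteq> 0" using s_minus_nz[OF assms(1)] .
    show "complex_of_real (poly P s * w s) / (complex_of_real s - (\<zeta> + h)) - complex_of_real (poly P s * w s) / (complex_of_real s - \<zeta>) =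
        h * (complex_of_real (poly P s * w s) / ((complex_of_real s - (\<zeta> + h)) * (complex_of_real s - \<zeta>)))"
      using n1 n2 by (simp add: field_simps)
  qed
  also have "\<dots> = h * (CLINT s|lborel. complex_of_real (poly P s * w s) / ((complex_of_real s - (\<zeta> + h)) * (complex_of_real s - \<zeta>)))"
    by (rule integral_mult_right_zero)
  finally show ?thesis using assms(3) by simp
qed

lemma CT_deriv: assumes "Im \<zeta> \<noteq> 0"
  shows "(cauchyT w P has_field_derivative DT P \<zeta>) (at \<zeta>)"
proof -
  define r where "r = \<bar>Im \<zeta>\<bar> / 2"
  have r: "0 < r" using assms by (simp add: r_def)
  define g where "g = (\<lambda>s. complex_of_real (poly P s * w s))"
  have lim: "(\<lambda>i. (cauchyT w P (\<zeta> + X i) - cauchyT w P \<zeta>) / X i) \<longlonglongrightarrow> DT P \<zeta>"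
    if X0: "\<And>i. X i \<noteq> 0" and XL: "X \<longlonglongrightarrow> 0" for X
  proof -
    obtain N where N: "\<And>i. i \<ge> N \<Longrightarrow> norm (X i) < r"
      using XL r unfolding LIMSEQ_def by (metis dist_0_norm dist_commute)
    define Y where "Y i = X (i + N)" for i
    have Yr: "norm (Y i) < r" for i using N by (simp add: Y_def)
    have Y0: "Y i \<noteq> 0" for i using X0 by (simp add: Y_def)
    have YL: "Y \<longlonglongrightarrow> 0" unfolding Y_def using XL by (rule LIMSEQ_ignore_initial_segment)
    have ImY: "\<bar>Im (\<zeta> + Y i)\<bar> \<ge> r" for i
    proof -
      have "\<bar>Im (Y i)\<bar> \<le> norm (Y i)" by (rule abs_Im_le_cmod)
      then show ?thesis using Yr[of i] unfolding r_def by (simp add: abs_if split: if_splits)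
    qed
    have ImY0: "Im (\<zeta> + Y i) \<noteq> 0" for i using ImY[of i] r by auto
    have "(\<lambda>i. CLINT s|lborel. g s / ((complex_of_real s - (\<zeta> + Y i)) * (complex_of_real s - \<zeta>)))
        \<longlonglongrightarrow> (CLINT s|lborel. g s / (complex_of_real s - \<zeta>)^2)"
    proof (rule integral_dominated_convergence[where w="\<lambda>s. \<bar>poly P s * w s\<bar> / (r * r)"])
      show "(\<lambda>s. g s / (complex_of_real s - \<zeta>)\<^sup>2) \<in> borel_measurable lborel"
        unfolding g_def by measurable
      show "(\<lambda>s. g s / ((complex_of_real s - (\<zeta> + Y i)) * (complex_of_real s - \<zeta>))) \<in> borel_measurable lborel" for i
        unfolding g_def by measurable
      show "integrable lborel (\<lambda>s. \<bar>poly P s * w s\<bar> / (r * r))"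
        using int_pw_abs by (rule integrable_divide_zero)
      show "AE s in lborel. (\<lambda>i. g s / ((complex_of_real s - (\<zeta> + Y i)) * (complex_of_real s - \<zeta>))) \<longlonglongrightarrow> g s / (complex_of_real s - \<zeta>)\<^sup>2"
      proof (intro AE_I2)
        fix s
        have "(\<lambda>i. g s / ((complex_of_real s - (\<zeta> + Y i)) * (complex_of_real s - \<zeta>))) \<longlonglongrightarrow> g s / ((complex_of_real s - (\<zeta> + 0)) * (complex_of_real s - \<zeta>))"
          using YL s_minus_nz[OF assms, of s] by (intro tendsto_intros) auto
        then show "(\<lambda>i. g s / ((complex_of_real s - (\<zeta> + Y i)) * (complex_of_real s - \<zeta>))) \<longlonglongrightarrow> g s / (complex_of_real s - \<zeta>)\<^sup>2"
          by (simp add: power2_eq_square)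
      qed
      show "AE s in lborel. norm (g s / ((complex_of_real s - (\<zeta> + Y i)) * (complex_of_real s - \<zeta>))) \<le> \<bar>poly P s * w s\<bar> / (r * r)" for i
      proof (intro AE_I2)
        fix s
        have a1: "r \<le> cmod (complex_of_real s - (\<zeta> + Y i))" using ImY[of i] norm_s_minus[of "\<zeta> + Y i" s] by linarith
        have a2: "r \<le> cmod (complex_of_real s - \<zeta>)" using norm_s_minus[of \<zeta> s] r unfolding r_def by linarith
        have "norm (g s / ((complex_of_real s - (\<zeta> + Y i)) * (complex_of_real s - \<zeta>))) =
            \<bar>poly P s * w s\<bar> / (cmod (complex_of_real s - (\<zeta> + Y i)) * cmod (complex_of_real s - \<zeta>))"
          unfolding g_def by (simp add: norm_divide norm_mult abs_mult)
        also have "\<dots> \<le> \<bar>poly P s * w s\<bar> / (r * r)"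
          using a1 a2 r by (intro divide_left_mono mult_mono mult_pos_pos) auto
        finally show "norm (g s / ((complex_of_real s - (\<zeta> + Y i)) * (complex_of_real s - \<zeta>))) \<le> \<bar>poly P s * w s\<bar> / (r * r)" .
      qed
    qed
    then have "(\<lambda>i. (cauchyT w P (\<zeta> + Y i) - cauchyT w P \<zeta>) / Y i) \<longlonglongrightarrow> DT P \<zeta>"
      unfolding DT_def g_def using CT_diffquot[OF assms ImY0 Y0] by simp
    then show ?thesis unfolding Y_def by (rule LIMSEQ_offset)
  qed
  show ?thesis unfolding DERIV_def tendsto_at_iff_sequentially
    using lim by (auto simp: comp_def)
qed

end

lemma mat2_nth: "mat2 a b c d $ 1 $ 1 = a" "mat2 a b c d $ 1 $ 2 = b" "mat2 a b c d $ 2 $ 1 = c" "mat2 a b c d $ 2 $ 2 = d"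
  by (simp_all add: mat2_def)

lemma mat2_mult: "mat2 a b c d ** mat2 e f g h = mat2 (a*e + b*g) (a*f + b*h) (c*e + d*g) (c*f + d*h)"
  unfolding matrix_matrix_mult_def by (simp add: vec_eq_iff forall_2 sum_2 mat2_nth)

lemma mat2_add: "mat2 a b c d + mat2 e f g h = mat2 (a+e) (b+f) (c+g) (d+h)"
  by (simp add: vec_eq_iff forall_2 mat2_nth)

lemma mat2_sum: "(\<Sum>k\<in>A. mat2 (f1 k) (f2 k) (f3 k) (f4 k)) = mat2 (\<Sum>k\<in>A. f1 k) (\<Sum>k\<in>A. f2 k) (\<Sum>k\<in>A. f3 k) (\<Sum>k\<in>A. f4 k)"
proof (induction A rule: infinite_finite_induct)
  case (infinite A) then show ?case by (simp add: mat2_def vec_eq_iff)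
next
  case empty then show ?case by (simp add: mat2_def vec_eq_iff)
next
  case (insert a A) then show ?case by (simp add: mat2_add)
qed

lemma Phi_eq: "Phi m c wh n z x = mat2
  (exp (- complex_of_real (x\<^sup>2 / 2)) * (- cauchyT (weight m c wh x) (OP (weight m c wh x) (n - 1)) (z + complex_of_real x) / complex_of_real (hnorm (weight m c wh x) (n - 1))) * exp ((z + complex_of_real x)\<^sup>2 / 2))
  (exp (- complex_of_real (x\<^sup>2 / 2)) * (- (2 * complex_of_real pi * \<i>) / complex_of_real (hnorm (weight m c wh x) (n - 1)) * cpoly (OP (weight m c wh x) (n - 1)) (z + complex_of_real x)) * exp (- (z + complex_of_real x)\<^sup>2 / 2))
  (exp (complex_of_real (x\<^sup>2 / 2)) * (cauchyT (weight m c wh x) (OP (weight m c wh x) n) (z + complex_of_real x) / (2 * complex_of_real pi * \<i>)) * exp ((z + complex_of_real x)\<^sup>2 / 2))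
  (exp (complex_of_real (x\<^sup>2 / 2)) * cpoly (OP (weight m c wh x) n) (z + complex_of_real x) * exp (- (z + complex_of_real x)\<^sup>2 / 2))"
  unfolding Phi_def sigma1_def expsig3_def Ymat_def mat2_mult by simp

lemma Alax_eq: "Alax m c n y a b z x = mat2
   (z + complex_of_real x + (\<Sum>k=1..m. a k * b k / (z - complex_of_real (c k))))
   (y + (\<Sum>k=1..m. a k * y / (z - complex_of_real (c k))))
   (- 2 * ((\<Sum>k=1..m. a k * b k) + of_nat n) / y + (\<Sum>k=1..m. - a k * (b k)\<^sup>2 / y / (z - complex_of_real (c k))))
   (- (z + complex_of_real x) + (\<Sum>k=1..m. - a k * b k / (z - complex_of_real (c k))))"
  unfolding Alax_def mat2_sum mat2_add by simp


context wt begin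

lemma norm_s_minus_eps: "cmod (complex_of_real s - (complex_of_real t + \<i> * complex_of_real e))^2 = (s - t)^2 + e^2"
  by (simp add: cmod_def)

lemma CT_eps:
  assumes e0: "\<And>j. 0 < e j" and eL: "e \<longlonglongrightarrow> 0"
  shows "(\<lambda>j. complex_of_real (e j) * cauchyT w P (complex_of_real t + \<i> * complex_of_real (e j))) \<longlonglongrightarrow> 0"
proof -
  define Z where "Z j = complex_of_real t + \<i> * complex_of_real (e j)" for j
  have ImZ: "Im (Z j) = e j" for j by (simp add: Z_def)
  have "(\<lambda>j. CLINT s|lborel. complex_of_real (e j) * (complex_of_real (poly P s * w s) / (complex_of_real s - Z j))) \<longlonglongrightarrow> (CLINT (s::real)|lborel. 0)"
  proof (rule integral_dominated_convergence[where w="\<lambda>s. \<bar>poly P s * w s\<bar>" and f="\<lambda>s::real. 0"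
      and s="\<lambda>j s. complex_of_real (e j) * (complex_of_real (poly P s * w s) / (complex_of_real s - Z j))"])
    show "(\<lambda>s. 0::complex) \<in> borel_measurable lborel" by simp
    show "(\<lambda>s. complex_of_real (e j) * (complex_of_real (poly P s * w s) / (complex_of_real s - Z j))) \<in> borel_measurable lborel" for j
      by measurable
    show "integrable lborel (\<lambda>s. \<bar>poly P s * w s\<bar>)" by (rule int_pw_abs)
    show "AE s in lborel. (\<lambda>j. complex_of_real (e j) * (complex_of_real (poly P s * w s) / (complex_of_real s - Z j))) \<longlonglongrightarrow> 0"
      using AE_lborel_singleton[of t]
    proof eventually_elim
      case (elim s)
      have "(\<lambda>j. complex_of_real (e j) * (complex_of_real (poly P s * w s) / (complex_of_real s - Z j))) \<longlonglongrightarrow>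
          complex_of_real 0 * (complex_of_real (poly P s * w s) / (complex_of_real s - (complex_of_real t + \<i> * complex_of_real 0)))"
        unfolding Z_def using eL elim by (intro tendsto_intros) auto
      then show ?case by simp
    qed
    show "AE s in lborel. norm (complex_of_real (e j) * (complex_of_real (poly P s * w s) / (complex_of_real s - Z j))) \<le> \<bar>poly P s * w s\<bar>" for j
    proof (intro AE_I2)
      fix s
      have a: "e j \<le> cmod (complex_of_real s - Z j)" using norm_s_minus[of "Z j" s] ImZ[of j] e0[of j] by simp
      have "norm (complex_of_real (e j) * (complex_of_real (poly P s * w s) / (complex_of_real s - Z j))) =
          \<bar>poly P s * w s\<bar> * (e j / cmod (complex_of_real s - Z j))"
        using e0[of j] by (simp add: norm_divide norm_mult abs_mult)
      also have "\<dots> \<le> \<bar>poly P s * w s\<bar> * 1"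
        using a e0[of j] by (intro mult_left_mono) (auto simp: divide_le_eq_1)
      finally show "norm (complex_of_real (e j) * (complex_of_real (poly P s * w s) / (complex_of_real s - Z j))) \<le> \<bar>poly P s * w s\<bar>" by simp
    qed
  qed
  then show ?thesis unfolding cauchyT_def Z_def integral_mult_right_zero integral_zero .
qed

end

lemma K_deriv: assumes "u \<noteq> \<zeta>"
  shows "((\<lambda>u. - 1 / (u - \<zeta>)) has_field_derivative 1 / (u - \<zeta>)^2) (at u)"
proof -
  have "((\<lambda>u. - 1 / (u - \<zeta>)) has_field_derivative (0 * (u - \<zeta>) - (- 1) * (1 - 0)) / ((u - \<zeta>) * (u - \<zeta>))) (at u)"
    using assms by (intro DERIV_divide derivative_intros) auto
  then show ?thesis using assms by (simp add: power2_eq_square)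
qed

lemma KI:
  fixes \<zeta> :: complex and a b :: real
  assumes "Im \<zeta> \<noteq> 0" "a \<le> b"
  shows "integrable lborel (\<lambda>s. complex_of_real (indicator {a<..<b} s) * (1 / (complex_of_real s - \<zeta>)^2))"
    and "(CLINT s|lborel. complex_of_real (indicator {a<..<b} s) * (1 / (complex_of_real s - \<zeta>)^2)) = - 1 / (complex_of_real b - \<zeta>) + 1 / (complex_of_real a - \<zeta>)"
proof -
  have nz: "complex_of_real s - \<zeta> \<noteq> 0" for s using assms(1) by (auto simp: complex_eq_iff)
  have cont: "continuous_on {a..b} (\<lambda>s. 1 / (complex_of_real s - \<zeta>)^2)"
    using nz by (intro continuous_intros) auto
  have "interval_lebesgue_integrable lborel (ereal a) (ereal b) (\<lambda>s. 1 / (complex_of_real s - \<zeta>)^2)"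
    using interval_integrable_continuous_on[OF assms(2) cont] .
  then show "integrable lborel (\<lambda>s. complex_of_real (indicator {a<..<b} s) * (1 / (complex_of_real s - \<zeta>)^2))"
    using assms(2) by (simp add: interval_lebesgue_integrable_def set_integrable_def einterval_def scaleR_conv_of_real greaterThanLessThan_def greaterThan_def lessThan_def Collect_conj_eq)
  have "interval_lebesgue_integral lborel (ereal a) (ereal b) (\<lambda>s. 1 / (complex_of_real s - \<zeta>)^2) =
      (\<lambda>s. - 1 / (complex_of_real s - \<zeta>)) b - (\<lambda>s. - 1 / (complex_of_real s - \<zeta>)) a"
  proof (rule interval_integral_FTC_finite)
    show "continuous_on {min a b..max a b} (\<lambda>s. 1 / (complex_of_real s - \<zeta>)^2)" using cont assms(2) by simp
    fix s
    show "((\<lambda>s. - 1 / (complex_of_real s - \<zeta>)) has_vector_derivative 1 / (complex_of_real s - \<zeta>)^2) (at s within {min a b..max a b})"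
      using K_deriv[of "complex_of_real s" \<zeta>] nz[of s] by (intro has_vector_derivative_real_field) auto
  qed
  moreover have "interval_lebesgue_integral lborel (ereal a) (ereal b) (\<lambda>s. 1 / (complex_of_real s - \<zeta>)^2) =
      (CLINT s|lborel. complex_of_real (indicator {a<..<b} s) * (1 / (complex_of_real s - \<zeta>)^2))"
    using assms(2) by (simp add: interval_integral_Ioo set_lebesgue_integral_def scaleR_conv_of_real)
  ultimately show "(CLINT s|lborel. complex_of_real (indicator {a<..<b} s) * (1 / (complex_of_real s - \<zeta>)^2)) = - 1 / (complex_of_real b - \<zeta>) + 1 / (complex_of_real a - \<zeta>)"
    by simp
qed

lemma gauss_lip:
  fixes P :: "real poly" and t d :: real
  obtains L where "L \<ge> 0" "\<And>s. s \<in> {t - d..t + d} \<Longrightarrow> \<bar>poly P s * exp (- s\<^sup>2) - poly P t * exp (- t\<^sup>2)\<bar> \<le> L * \<bar>s - t\<bar>"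
proof -
  define G' where "G' s = poly (pderiv P) s * exp (- s\<^sup>2) + poly P s * (exp (- s\<^sup>2) * (- (2 * s)))" for s
  have der: "((\<lambda>s. poly P s * exp (- s\<^sup>2)) has_field_derivative G' s) (at s within S)" for s S
    unfolding G'_def by (auto intro!: derivative_eq_intros simp: power2_eq_square)
  have "continuous_on {t - d..t + d} G'" unfolding G'_def
    using continuous_on_poly[OF continuous_on_id, of _ "pderiv P"] continuous_on_poly[OF continuous_on_id, of _ P]
    by (intro continuous_intros)
  then obtain L where L: "L \<ge> 0" "\<And>s. s \<in> {t - d..t + d} \<Longrightarrow> norm (G' s) \<le> L"
    using continuous_on_compact_bound[of "{t - d..t + d}" G'] by auto
  show ?thesis
  proof (rule that[OF L(1)])
    fix s assume s: "s \<in> {t - d..t + d}"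
    show "\<bar>poly P s * exp (- s\<^sup>2) - poly P t * exp (- t\<^sup>2)\<bar> \<le> L * \<bar>s - t\<bar>"
    proof (cases "t - d \<le> t + d")
      case True
      then have "t \<in> {t - d..t + d}" by auto
      then show ?thesis
        using field_differentiable_bound[of "{t - d..t + d}" "\<lambda>s. poly P s * exp (- s\<^sup>2)" G' L s t] der L s
        by auto
    next
      case False then show ?thesis using s by auto
    qed
  qed
qed


lemma alg:
  fixes g0 E0 u0 A0 B0 sm0 sp0 :: complex
  assumes "E0 \<noteq> 0" "u0 = - \<i> * E0"
  shows "g0 * E0 * (sm0 * (- 1 / u0 + A0) + sp0 * (B0 + 1 / u0)) = g0 * (sm0 * (- \<i> + E0 * A0) + sp0 * (E0 * B0 + \<i>))"
proof -
  have 1: "E0 * (1 / u0) = \<i>" using assms by (simp add: field_simps)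
  have "g0 * E0 * (sm0 * (- 1 / u0 + A0) + sp0 * (B0 + 1 / u0)) = g0 * (sm0 * (- (E0 * (1 / u0)) + E0 * A0) + sp0 * (E0 * B0 + E0 * (1 / u0)))"
    by (simp add: algebra_simps)
  then show ?thesis unfolding 1 .
qed

context wt begin

lemma DT_eps:
  assumes e0: "\<And>j. 0 < e j" and e1: "\<And>j. e j \<le> 1" and eL: "e \<longlonglongrightarrow> 0"
    and dpos: "0 < d"
    and wl: "\<And>s. t - d < s \<Longrightarrow> s < t \<Longrightarrow> w s = exp (- s\<^sup>2) * sm"
    and wr: "\<And>s. t < s \<Longrightarrow> s < t + d \<Longrightarrow> w s = exp (- s\<^sup>2) * sp"
  shows "(\<lambda>j. complex_of_real (e j) * DT P (complex_of_real t + \<i> * complex_of_real (e j)))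
           \<longlonglongrightarrow> \<i> * complex_of_real ((sp - sm) * (poly P t * exp (- t\<^sup>2)))"
proof -
  define Z where "Z j = complex_of_real t + \<i> * complex_of_real (e j)" for j
  have ImZ: "Im (Z j) \<noteq> 0" for j using e0[of j] by (simp add: Z_def)
  have ZL: "Z \<longlonglongrightarrow> complex_of_real t + \<i> * complex_of_real 0"
    unfolding Z_def using eL by (intro tendsto_intros)
  define G where "G s = poly P s * exp (- s\<^sup>2)" for s
  obtain L where L: "L \<ge> 0" "\<And>s. s \<in> {t - d..t + d} \<Longrightarrow> \<bar>G s - G t\<bar> \<le> L * \<bar>s - t\<bar>"
    using gauss_lip[where P=P and t=t and d=d] unfolding G_def by metis
  define K where "K j s = 1 / (complex_of_real s - Z j)^2" for j s
  define I1 where "I1 = {t - d<..<t}"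
  define I2 where "I2 = {t<..<t + d}"
  define T where "T j s = complex_of_real (G t * e j) * (complex_of_real sm * (complex_of_real (indicator I1 s) * K j s) + complex_of_real sp * (complex_of_real (indicator I2 s) * K j s))" for j s
  define E where "E j s = complex_of_real (e j) * (complex_of_real (poly P s * w s) / (complex_of_real s - Z j)^2)" for j s
  define R where "R j s = E j s - T j s" for j s
  have intI1: "integrable lborel (\<lambda>s. complex_of_real (indicator I1 s) * K j s)"
    and valI1: "(CLINT s|lborel. complex_of_real (indicator I1 s) * K j s) = - 1 / (complex_of_real t - Z j) + 1 / (complex_of_real (t - d) - Z j)" for j
    unfolding I1_def K_def using KI[OF ImZ[of j], of "t - d" t] dpos by auto
  have intI2: "integrable lborel (\<lambda>s. complex_of_real (indicator I2 s) * K j s)"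
    and valI2: "(CLINT s|lborel. complex_of_real (indicator I2 s) * K j s) = - 1 / (complex_of_real (t + d) - Z j) + 1 / (complex_of_real t - Z j)" for j
    unfolding I2_def K_def using KI[OF ImZ[of j], of t "t + d"] dpos by auto
  have intT: "integrable lborel (T j)" for j
    unfolding T_def using intI1[of j] intI2[of j]
    by (intro integrable_mult_right integrable_add) auto
  have valT: "integral\<^sup>L lborel (T j) = complex_of_real (G t * e j) * (complex_of_real sm * (CLINT s|lborel. complex_of_real (indicator I1 s) * K j s) + complex_of_real sp * (CLINT s|lborel. complex_of_real (indicator I2 s) * K j s))" for j
  proof -
    have "integral\<^sup>L lborel (T j) = complex_of_real (G t * e j) * (CLINT s|lborel. complex_of_real sm * (complex_of_real (indicator I1 s) * K j s) + complex_of_real sp * (complex_of_real (indicator I2 s) * K j s))"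
      unfolding T_def by (rule integral_mult_right_zero)
    also have "\<dots> = complex_of_real (G t * e j) * ((CLINT s|lborel. complex_of_real sm * (complex_of_real (indicator I1 s) * K j s)) + (CLINT s|lborel. complex_of_real sp * (complex_of_real (indicator I2 s) * K j s)))"
      using intI1[of j] intI2[of j] by (subst Bochner_Integration.integral_add) (auto intro: integrable_mult_right)
    finally show ?thesis by (simp only: integral_mult_right_zero)
  qed
  have intE: "integrable lborel (E j)" for j
    unfolding E_def using DT_int[OF ImZ[of j], of P] by (rule integrable_mult_right)
  have split: "complex_of_real (e j) * DT P (Z j) = integral\<^sup>L lborel (R j) + integral\<^sup>L lborel (T j)" for j
  proof -
    have "complex_of_real (e j) * DT P (Z j) = integral\<^sup>L lborel (E j)"
      unfolding DT_def E_def by (rule integral_mult_right_zero[symmetric])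
    also have "\<dots> = integral\<^sup>L lborel (R j) + integral\<^sup>L lborel (T j)"
      unfolding R_def using intE[of j] intT[of j] by (subst Bochner_Integration.integral_diff) auto
    finally show ?thesis .
  qed
  have limT: "(\<lambda>j. integral\<^sup>L lborel (T j)) \<longlonglongrightarrow> \<i> * complex_of_real ((sp - sm) * G t)"
  proof -
    have eq: "integral\<^sup>L lborel (T j) = complex_of_real (G t) * (complex_of_real sm * (- \<i> + complex_of_real (e j) * (1 / (complex_of_real (t - d) - Z j))) +
         complex_of_real sp * (complex_of_real (e j) * (- 1 / (complex_of_real (t + d) - Z j)) + \<i>))" for j
    proof -
      have ej: "complex_of_real (e j) \<noteq> 0" using e0[of j] by simp
      have a: "complex_of_real t - Z j = - \<i> * complex_of_real (e j)" by (simp add: Z_def)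
      have "integral\<^sup>L lborel (T j) = complex_of_real (G t) * complex_of_real (e j) * (complex_of_real sm * (- 1 / (complex_of_real t - Z j) + 1 / (complex_of_real (t - d) - Z j)) + complex_of_real sp * (- 1 / (complex_of_real (t + d) - Z j) + 1 / (complex_of_real t - Z j)))"
        unfolding valT valI1 valI2 by simp
      also have "\<dots> = complex_of_real (G t) * (complex_of_real sm * (- \<i> + complex_of_real (e j) * (1 / (complex_of_real (t - d) - Z j))) +
         complex_of_real sp * (complex_of_real (e j) * (- 1 / (complex_of_real (t + d) - Z j)) + \<i>))"
        by (rule alg[OF ej a])
      finally show ?thesis .
    qed
    have "(\<lambda>j. complex_of_real (G t) * (complex_of_real sm * (- \<i> + complex_of_real (e j) * (1 / (complex_of_real (t - d) - Z j))) +
         complex_of_real sp * (complex_of_real (e j) * (- 1 / (complex_of_real (t + d) - Z j)) + \<i>)))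
       \<longlonglongrightarrow> complex_of_real (G t) * (complex_of_real sm * (- \<i> + complex_of_real 0 * (1 / (complex_of_real (t - d) - (complex_of_real t + \<i> * complex_of_real 0)))) +
         complex_of_real sp * (complex_of_real 0 * (- 1 / (complex_of_real (t + d) - (complex_of_real t + \<i> * complex_of_real 0))) + \<i>))"
      using dpos by (intro tendsto_intros eL ZL) (auto simp: complex_eq_iff)
    then show ?thesis unfolding eq by (simp add: algebra_simps)
  qed
  have limR: "(\<lambda>j. integral\<^sup>L lborel (R j)) \<longlonglongrightarrow> (CLINT (s::real)|lborel. 0)"
  proof (rule integral_dominated_convergence[where w="\<lambda>s. \<bar>poly P s * w s\<bar> / d\<^sup>2 + L * (\<bar>sm\<bar> + \<bar>sp\<bar>) * indicator {t - d..t + d} s"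
        and f="\<lambda>s::real. 0" and s=R])
    show "(\<lambda>s::real. 0::complex) \<in> borel_measurable lborel" by simp
    show "R j \<in> borel_measurable lborel" for j
      unfolding R_def E_def T_def K_def I1_def I2_def by measurable
    show "integrable lborel (\<lambda>s. \<bar>poly P s * w s\<bar> / d\<^sup>2 + L * (\<bar>sm\<bar> + \<bar>sp\<bar>) * indicator {t - d..t + d} s)"
    proof (rule Bochner_Integration.integrable_add)
      show "integrable lborel (\<lambda>s. \<bar>poly P s * w s\<bar> / d\<^sup>2)" using int_pw_abs by (rule integrable_divide_zero)
      have "integrable lborel (indicator {t - d..t + d} :: real \<Rightarrow> real)"
        using dpos by (intro integrable_real_indicator) (auto simp: emeasure_lborel_Icc)
      then show "integrable lborel (\<lambda>s. L * (\<bar>sm\<bar> + \<bar>sp\<bar>) * indicator {t - d..t + d} s)"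
        by (rule integrable_mult_right)
    qed
    show "AE s in lborel. (\<lambda>j. R j s) \<longlonglongrightarrow> 0"
      using AE_lborel_singleton[of t]
    proof eventually_elim
      case (elim s)
      have ne: "complex_of_real s - (complex_of_real t + \<i> * complex_of_real 0) \<noteq> 0" using elim by (simp add: complex_eq_iff)
      have R_eq: "R j s = complex_of_real (e j) * (complex_of_real (poly P s * w s) / (complex_of_real s - Z j)^2 -
           complex_of_real (G t) * (complex_of_real sm * (complex_of_real (indicator I1 s) / (complex_of_real s - Z j)^2) + complex_of_real sp * (complex_of_real (indicator I2 s) / (complex_of_real s - Z j)^2)))" for j
        unfolding R_def E_def T_def K_def by (simp add: algebra_simps)
      have "(\<lambda>j. complex_of_real (e j) * (complex_of_real (poly P s * w s) / (complex_of_real s - Z j)^2 -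
           complex_of_real (G t) * (complex_of_real sm * (complex_of_real (indicator I1 s) / (complex_of_real s - Z j)^2) + complex_of_real sp * (complex_of_real (indicator I2 s) / (complex_of_real s - Z j)^2))))
         \<longlonglongrightarrow> complex_of_real 0 * (complex_of_real (poly P s * w s) / (complex_of_real s - (complex_of_real t + \<i> * complex_of_real 0))^2 -
           complex_of_real (G t) * (complex_of_real sm * (complex_of_real (indicator I1 s) / (complex_of_real s - (complex_of_real t + \<i> * complex_of_real 0))^2) + complex_of_real sp * (complex_of_real (indicator I2 s) / (complex_of_real s - (complex_of_real t + \<i> * complex_of_real 0))^2)))"
        using ne by (intro tendsto_intros eL ZL) auto
      then show ?case unfolding R_eq by simp
    qed
    show "AE s in lborel. norm (R j s) \<le> \<bar>poly P s * w s\<bar> / d\<^sup>2 + L * (\<bar>sm\<bar> + \<bar>sp\<bar>) * indicator {t - d..t + d} s" for j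
      using AE_lborel_singleton[of t] AE_lborel_singleton[of "t - d"] AE_lborel_singleton[of "t + d"]
    proof eventually_elim
      case (elim s)
      have nZ: "(cmod (complex_of_real s - Z j))^2 = (s - t)^2 + (e j)^2"
        unfolding Z_def by (rule norm_s_minus_eps)
      have ej: "0 < e j" "e j \<le> 1" using e0 e1 by auto
      have Kn: "norm (K j s) = 1 / ((s - t)^2 + (e j)^2)"
        unfolding K_def by (simp add: norm_divide norm_power nZ)
      have key: "e j * \<bar>s - t\<bar> / ((s - t)^2 + (e j)^2) \<le> 1 / 2"
      proof -
        have "2 * (e j * \<bar>s - t\<bar>) \<le> (s - t)^2 + (e j)^2"
          using sum_squares_bound[of "e j" "\<bar>s - t\<bar>"] by (simp add: power2_abs)
        moreover have "0 < (s - t)^2 + (e j)^2" using ej by (simp add: add_nonneg_pos)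
        ultimately show ?thesis by (simp add: divide_simps)
      qed
      have Hnn: "0 \<le> \<bar>poly P s * w s\<bar> / d\<^sup>2" by simp
      have Hnn2: "0 \<le> L * (\<bar>sm\<bar> + \<bar>sp\<bar>) * indicator {t - d..t + d} s" using L(1) by simp
      consider (a) "s \<in> I1" | (b) "s \<in> I2" | (c) "s \<notin> I1" "s \<notin> I2" by blast
      then show ?case
      proof cases
        case a
        then have s: "t - d < s" "s < t" "s \<notin> I2" unfolding I1_def I2_def by auto
        have "R j s = complex_of_real (e j * sm * (G s - G t)) * K j s"
          unfolding R_def E_def T_def K_def using a s wl[OF s(1,2)]
          by (simp add: G_def algebra_simps)
        then have "norm (R j s) = \<bar>sm\<bar> * (e j * \<bar>G s - G t\<bar> / ((s - t)^2 + (e j)^2))"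
          using ej by (simp add: norm_mult Kn abs_mult del: of_real_diff)
        also have "\<dots> \<le> \<bar>sm\<bar> * (e j * (L * \<bar>s - t\<bar>) / ((s - t)^2 + (e j)^2))"
          using L(2)[of s] s ej by (intro mult_left_mono divide_right_mono mult_left_mono) auto
        also have "\<dots> = \<bar>sm\<bar> * L * (e j * \<bar>s - t\<bar> / ((s - t)^2 + (e j)^2))" by (simp add: algebra_simps)
        also have "\<dots> \<le> \<bar>sm\<bar> * L * (1 / 2)" using key L(1) by (intro mult_left_mono) auto
        also have "\<dots> \<le> L * (\<bar>sm\<bar> + \<bar>sp\<bar>) * indicator {t - d..t + d} s"
          using s L(1) by (simp add: indicator_def algebra_simps)
        finally show ?thesis using Hnn by linarith
      next
        case b
        then have s: "t < s" "s < t + d" "s \<notin> I1" unfolding I1_def I2_def by auto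
        have "R j s = complex_of_real (e j * sp * (G s - G t)) * K j s"
          unfolding R_def E_def T_def K_def using b s wr[OF s(1,2)]
          by (simp add: G_def algebra_simps)
        then have "norm (R j s) = \<bar>sp\<bar> * (e j * \<bar>G s - G t\<bar> / ((s - t)^2 + (e j)^2))"
          using ej by (simp add: norm_mult Kn abs_mult del: of_real_diff)
        also have "\<dots> \<le> \<bar>sp\<bar> * (e j * (L * \<bar>s - t\<bar>) / ((s - t)^2 + (e j)^2))"
          using L(2)[of s] s ej by (intro mult_left_mono divide_right_mono mult_left_mono) auto
        also have "\<dots> = \<bar>sp\<bar> * L * (e j * \<bar>s - t\<bar> / ((s - t)^2 + (e j)^2))" by (simp add: algebra_simps)
        also have "\<dots> \<le> \<bar>sp\<bar> * L * (1 / 2)" using key L(1) by (intro mult_left_mono) auto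
        also have "\<dots> \<le> L * (\<bar>sm\<bar> + \<bar>sp\<bar>) * indicator {t - d..t + d} s"
          using s L(1) by (simp add: indicator_def algebra_simps)
        finally show ?thesis using Hnn by linarith
      next
        case c
        then have far: "d \<le> \<bar>s - t\<bar>" using elim unfolding I1_def I2_def by (auto simp: abs_if)
        have "R j s = E j s" unfolding R_def T_def using c by simp
        then have "norm (R j s) = e j * (\<bar>poly P s * w s\<bar> / ((s - t)^2 + (e j)^2))"
          unfolding E_def using ej by (simp add: norm_mult norm_divide norm_power nZ abs_mult)
        also have "\<dots> \<le> 1 * (\<bar>poly P s * w s\<bar> / d^2)"
        proof (rule mult_mono)
          have "d^2 \<le> (s - t)^2" using far dpos by (metis abs_of_pos power2_abs power_mono less_imp_le)
          then have "d^2 \<le> (s - t)^2 + (e j)^2" by (simp add: add_increasing2)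
          then show "\<bar>poly P s * w s\<bar> / ((s - t)^2 + (e j)^2) \<le> \<bar>poly P s * w s\<bar> / d^2"
            using dpos by (intro divide_left_mono mult_pos_pos) (auto intro: order.strict_trans2[of 0 "d^2"])
        qed (use ej in auto)
        finally show ?thesis using Hnn2 by simp
      qed
    qed
  qed
  have "(\<lambda>j. integral\<^sup>L lborel (R j) + integral\<^sup>L lborel (T j)) \<longlonglongrightarrow> 0 + \<i> * complex_of_real ((sp - sm) * G t)"
    using limR limT by (intro tendsto_add) auto
  then show ?thesis unfolding split[symmetric] Z_def G_def by simp
qed

end

locale sloc0 =
  fixes m :: nat and c wh :: "nat \<Rightarrow> real" and x :: real
  assumes m: "m \<ge> 1" and c1: "c 1 = 0"
    and cmono: "\<And>i j. 1 \<le> i \<Longrightarrow> i < j \<Longrightarrow> j \<le> m \<Longrightarrow> c i < c j"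
    and wh0: "wh 0 = 1"
    and whpos: "\<And>i. 1 \<le> i \<Longrightarrow> i \<le> m \<Longrightarrow> wh i \<ge> 0"
begin

definition sig :: "real \<Rightarrow> real" where
  "sig s = 1 + (\<Sum>k=1..m. jump wh k * theta (s - tpt c x k))"

lemma weight_sig: "weight m c wh x s = exp (- s\<^sup>2) * sig s"
  unfolding weight_def sig_def ..

lemma theta_bound: "\<bar>theta y\<bar> \<le> 1" "0 \<le> theta y"
  unfolding theta_def by auto

definition Bw :: real where "Bw = 1 + (\<Sum>k=1..m. \<bar>jump wh k\<bar>)"

lemma sig_bound: "\<bar>sig s\<bar> \<le> Bw"
proof -
  have "\<bar>\<Sum>k=1..m. jump wh k * theta (s - tpt c x k)\<bar> \<le> (\<Sum>k=1..m. \<bar>jump wh k * theta (s - tpt c x k)\<bar>)"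
    by (rule sum_abs)
  also have "\<dots> \<le> (\<Sum>k=1..m. \<bar>jump wh k\<bar>)"
    by (intro sum_mono) (auto simp: abs_mult intro: mult_left_le theta_bound)
  finally show ?thesis unfolding sig_def Bw_def by linarith
qed

lemma sig_meas: "sig \<in> borel_measurable lborel"
  unfolding sig_def theta_def by measurable

lemma c_nonneg: "1 \<le> k \<Longrightarrow> k \<le> m \<Longrightarrow> 0 \<le> c k"
  using cmono[of 1 k] c1 by (cases "k = 1") auto

lemma c_mono_le: "1 \<le> i \<Longrightarrow> i \<le> j \<Longrightarrow> j \<le> m \<Longrightarrow> c i \<le> c j"
  using cmono[of i j] by (cases "i = j") auto

lemma sig_telescope:
  "M \<le> m \<Longrightarrow> \<exists>J\<le>M. 1 + (\<Sum>k=1..M. jump wh k * theta (s - tpt c x k)) = wh J \<and>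
      (\<forall>k. 1 \<le> k \<and> k \<le> M \<longrightarrow> (tpt c x k < s \<longleftrightarrow> k \<le> J))"
proof (induction M)
  case 0 then show ?case using wh0 by auto
next
  case (Suc M)
  then obtain J where J: "J \<le> M" "1 + (\<Sum>k=1..M. jump wh k * theta (s - tpt c x k)) = wh J"
    "\<And>k. 1 \<le> k \<Longrightarrow> k \<le> M \<Longrightarrow> (tpt c x k < s \<longleftrightarrow> k \<le> J)" by auto
  have split: "1 + (\<Sum>k=1..Suc M. jump wh k * theta (s - tpt c x k)) = wh J + jump wh (Suc M) * theta (s - tpt c x (Suc M))"
    using J(2) by simp
  show ?case
  proof (cases "tpt c x (Suc M) < s")
    case True
    have "J = M"
    proof (cases "M = 0")
      case True then show ?thesis using J(1) by simp
    next
      case False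
      have "c M < c (Suc M)" using cmono[of M "Suc M"] False Suc.prems by auto
      then have "tpt c x M < s" using True by (simp add: tpt_def)
      then show ?thesis using J(1) J(3)[of M] False by auto
    qed
    then have "1 + (\<Sum>k=1..Suc M. jump wh k * theta (s - tpt c x k)) = wh (Suc M)"
      unfolding split using True by (simp add: theta_def jump_def)
    moreover have "\<forall>k. 1 \<le> k \<and> k \<le> Suc M \<longrightarrow> (tpt c x k < s \<longleftrightarrow> k \<le> Suc M)"
    proof (intro allI impI)
      fix k assume k: "1 \<le> k \<and> k \<le> Suc M"
      show "tpt c x k < s \<longleftrightarrow> k \<le> Suc M"
        using c_mono_le[of k "Suc M"] k Suc.prems True by (auto simp: tpt_def)
    qed
    ultimately show ?thesis by blast
  next
    case False
    then have "1 + (\<Sum>k=1..Suc M. jump wh k * theta (s - tpt c x k)) = wh J"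
      unfolding split by (simp add: theta_def)
    moreover have "\<forall>k. 1 \<le> k \<and> k \<le> Suc M \<longrightarrow> (tpt c x k < s \<longleftrightarrow> k \<le> J)"
      using J(1) J(3) False by (auto simp: le_Suc_eq)
    ultimately show ?thesis using J(1) by (intro exI[of _ J]) auto
  qed
qed

lemma sig_nonneg: "0 \<le> sig s"
proof -
  obtain J where "J \<le> m" "sig s = wh J" using sig_telescope[of m s] unfolding sig_def by auto
  then show ?thesis using whpos[of J] wh0 by (cases "J = 0") auto
qed

lemma sig_left: assumes "s < x" shows "sig s = 1"
proof -
  have "theta (s - tpt c x k) = 0" if "k \<in> {1..m}" for k
    using c_nonneg[of k] that assms by (auto simp: theta_def tpt_def)
  then show ?thesis unfolding sig_def by (auto intro!: sum.neutral)
qed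

lemma wt_weight: "wt (weight m c wh x) Bw x"
proof
  show "weight m c wh x \<in> borel_measurable lborel"
    unfolding weight_sig using sig_meas by measurable
  fix s
  show "\<bar>weight m c wh x s\<bar> \<le> Bw * exp (- s\<^sup>2)"
    unfolding weight_sig using sig_bound[of s] by (simp add: abs_mult mult.commute)
  show "0 \<le> weight m c wh x s" unfolding weight_sig using sig_nonneg by simp
  assume "s < x"
  then show "0 < weight m c wh x s" unfolding weight_sig using sig_left by simp
qed

lemma c_inj: "1 \<le> j \<Longrightarrow> j \<le> m \<Longrightarrow> 1 \<le> k \<Longrightarrow> k \<le> m \<Longrightarrow> j \<noteq> k \<Longrightarrow> c j \<noteq> c k"
  using cmono[of j k] cmono[of k j] by (cases "j < k") auto

lemma local_structure:
  assumes k: "1 \<le> k" "k \<le> m"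
  obtains d sm where "0 < d"
    "\<And>s. tpt c x k - d < s \<Longrightarrow> s < tpt c x k \<Longrightarrow> weight m c wh x s = exp (- s\<^sup>2) * sm"
    "\<And>s. tpt c x k < s \<Longrightarrow> s < tpt c x k + d \<Longrightarrow> weight m c wh x s = exp (- s\<^sup>2) * (sm + jump wh k)"
    "\<And>j. 1 \<le> j \<Longrightarrow> j \<le> m \<Longrightarrow> j \<noteq> k \<Longrightarrow> d \<le> \<bar>c j - c k\<bar>"
proof -
  define D where "D = insert 1 ((\<lambda>j. \<bar>c j - c k\<bar>) ` ({1..m} - {k}))"
  define d where "d = Min D"
  have fD: "finite D" "D \<noteq> {}" unfolding D_def by auto
  have Dpos: "\<forall>v\<in>D. 0 < v" unfolding D_def using c_inj k by auto
  have dpos: "0 < d" unfolding d_def using fD Dpos by auto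
  have dle: "d \<le> \<bar>c j - c k\<bar>" if "1 \<le> j" "j \<le> m" "j \<noteq> k" for j
    unfolding d_def using fD that by (intro Min_le) (auto simp: D_def)
  define sm where "sm = 1 + (\<Sum>j\<in>{1..m} - {k}. jump wh j * theta (tpt c x k - tpt c x j))"
  have thj: "theta (s - tpt c x j) = theta (tpt c x k - tpt c x j)"
    if s: "\<bar>s - tpt c x k\<bar> < d" and j: "j \<in> {1..m} - {k}" for s j
  proof -
    have "d \<le> \<bar>tpt c x k - tpt c x j\<bar>" using dle[of j] j by (auto simp: tpt_def abs_minus_commute)
    then show ?thesis using s unfolding theta_def by (auto simp: abs_if split: if_splits)
  qed
  have sig_split: "sig s = sm + jump wh k * theta (s - tpt c x k)" if s: "\<bar>s - tpt c x k\<bar> < d" for s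
  proof -
    have "(\<Sum>j=1..m. jump wh j * theta (s - tpt c x j)) = jump wh k * theta (s - tpt c x k) + (\<Sum>j\<in>{1..m} - {k}. jump wh j * theta (s - tpt c x j))"
      using k by (subst sum.remove[of _ k]) auto
    also have "(\<Sum>j\<in>{1..m} - {k}. jump wh j * theta (s - tpt c x j)) = (\<Sum>j\<in>{1..m} - {k}. jump wh j * theta (tpt c x k - tpt c x j))"
      using thj[OF s] by (intro sum.cong) auto
    finally show ?thesis unfolding sig_def sm_def by simp
  qed
  show ?thesis
  proof (rule that[OF dpos _ _ dle])
    fix s assume "tpt c x k - d < s" "s < tpt c x k"
    then show "weight m c wh x s = exp (- s\<^sup>2) * sm"
      unfolding weight_sig using sig_split[of s] by (simp add: theta_def abs_if)
  next
    fix s assume "tpt c x k < s" "s < tpt c x k + d"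
    then show "weight m c wh x s = exp (- s\<^sup>2) * (sm + jump wh k)"
      unfolding weight_sig using sig_split[of s] by (simp add: theta_def abs_if)
  qed auto
qed

end

lemma poly_sum_d: "degree (R::complex poly) \<le> d \<Longrightarrow> poly R z = (\<Sum>i\<le>d. coeff R i * z ^ i)"
  unfolding poly_altdef by (rule sum.mono_neutral_left) (auto simp: coeff_eq_0)

lemma poly_asym:
  fixes R :: "complex poly" and Z :: "nat \<Rightarrow> complex"
  assumes "degree R \<le> d" "(\<lambda>j. inverse (Z j)) \<longlonglongrightarrow> 0" "\<And>j. Z j \<noteq> 0"
  shows "(\<lambda>j. poly R (Z j) / Z j ^ d) \<longlonglongrightarrow> coeff R d"
proof -
  have eq: "poly R (Z j) / Z j ^ d = (\<Sum>i\<le>d. coeff R i * inverse (Z j) ^ (d - i))" for j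
  proof -
    have "poly R (Z j) / Z j ^ d = (\<Sum>i\<le>d. coeff R i * (Z j ^ i / Z j ^ d))"
      unfolding poly_sum_d[OF assms(1)] by (simp add: sum_divide_distrib)
    also have "\<dots> = (\<Sum>i\<le>d. coeff R i * inverse (Z j) ^ (d - i))"
    proof (intro sum.cong refl)
      fix i assume "i \<in> {..d}"
      then have "Z j ^ d = Z j ^ i * Z j ^ (d - i)" by (simp add: power_add[symmetric])
      then show "coeff R i * (Z j ^ i / Z j ^ d) = coeff R i * inverse (Z j) ^ (d - i)"
        using assms(3)[of j] by (simp add: field_simps power_inverse)
    qed
    finally show ?thesis .
  qed
  have "(\<lambda>j. \<Sum>i\<le>d. coeff R i * inverse (Z j) ^ (d - i)) \<longlonglongrightarrow> (\<Sum>i\<le>d. coeff R i * 0 ^ (d - i))"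
    using assms(2) by (intro tendsto_intros)
  also have "(\<Sum>i\<le>d. coeff R i * (0::complex) ^ (d - i)) = coeff R d"
    by (subst sum.remove[of _ d]) (auto intro!: sum.neutral)
  finally show ?thesis unfolding eq .
qed

lemma cpoly_asym:
  fixes P :: "real poly" and Z :: "nat \<Rightarrow> complex"
  assumes "degree P \<le> d" "(\<lambda>j. inverse (Z j)) \<longlonglongrightarrow> 0" "\<And>j. Z j \<noteq> 0"
  shows "(\<lambda>j. cpoly P (Z j) / Z j ^ d) \<longlonglongrightarrow> complex_of_real (coeff P d)"
  using poly_asym[of "map_poly complex_of_real P" d Z] assms unfolding cpoly_def
  by (simp add: degree_map_poly coeff_map_poly)

lemma cpoly_deriv: "(cpoly P has_field_derivative poly (pderiv (map_poly complex_of_real P)) u) (at u)"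
  unfolding cpoly_def[abs_def] by (rule poly_DERIV)

lemma cpoly_pderiv_asym:
  fixes P :: "real poly" and Z :: "nat \<Rightarrow> complex"
  assumes "degree P \<le> d" "(\<lambda>j. inverse (Z j)) \<longlonglongrightarrow> 0" "\<And>j. Z j \<noteq> 0"
  shows "(\<lambda>j. poly (pderiv (map_poly complex_of_real P)) (Z j) / Z j ^ d) \<longlonglongrightarrow> 0"
proof -
  have d: "degree (pderiv (map_poly complex_of_real P)) \<le> d"
    using assms(1) by (simp add: degree_pderiv degree_map_poly)
  have "coeff (pderiv (map_poly complex_of_real P)) d = 0"
    using assms(1) by (simp add: coeff_pderiv coeff_eq_0 degree_map_poly)
  then show ?thesis using poly_asym[OF d assms(2,3)] by simp
qed

context wt begin

lemma CT_inf:
  assumes "\<And>j. Im (Z j) = real (Suc j)"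
  shows "(\<lambda>j. cauchyT w P (Z j)) \<longlonglongrightarrow> 0"
proof (rule Lim_null_comparison)
  show "\<forall>\<^sub>F j in sequentially. norm (cauchyT w P (Z j)) \<le> Ng P * inverse (real (Suc j))"
    using CT_bound[of "Z j" P for j] assms by (auto simp: divide_inverse)
  show "(\<lambda>j. Ng P * inverse (real (Suc j))) \<longlonglongrightarrow> 0"
    using tendsto_mult[OF tendsto_const LIMSEQ_inverse_real_of_nat, of "Ng P"] by simp
qed

lemma DT_inf:
  assumes "\<And>j. Im (Z j) = real (Suc j)"
  shows "(\<lambda>j. DT P (Z j)) \<longlonglongrightarrow> 0"
proof (rule Lim_null_comparison)
  have "norm (DT P (Z j)) \<le> Ng P * inverse (real (Suc j))" for j
  proof -
    have "norm (DT P (Z j)) \<le> Ng P / (real (Suc j))^2" using DT_bound[of "Z j" P] assms[of j] by simp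
    also have "\<dots> \<le> Ng P / real (Suc j)"
      by (intro divide_left_mono) (auto simp: Ng_def power2_eq_square)
    finally show ?thesis by (simp add: divide_inverse)
  qed
  then show "\<forall>\<^sub>F j in sequentially. norm (DT P (Z j)) \<le> Ng P * inverse (real (Suc j))" by simp
  show "(\<lambda>j. Ng P * inverse (real (Suc j))) \<longlonglongrightarrow> 0"
    using tendsto_mult[OF tendsto_const LIMSEQ_inverse_real_of_nat, of "Ng P"] by simp
qed

lemma inv_inf:
  assumes "\<And>j. Im (Z j) = real (Suc j)"
  shows "(\<lambda>j. inverse (Z j)) \<longlonglongrightarrow> 0" and "\<And>j. Z j \<noteq> 0"
proof -
  show nz: "Z j \<noteq> 0" for j using assms[of j] by auto
  show "(\<lambda>j. inverse (Z j)) \<longlonglongrightarrow> 0"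
  proof (rule Lim_null_comparison)
    have "norm (inverse (Z j)) \<le> inverse (real (Suc j))" for j
    proof -
      have "real (Suc j) \<le> cmod (Z j)" using abs_Im_le_cmod[of "Z j"] assms[of j] by simp
      then show ?thesis by (simp add: norm_inverse le_imp_inverse_le)
    qed
    then show "\<forall>\<^sub>F j in sequentially. norm (inverse (Z j)) \<le> inverse (real (Suc j))" by simp
    show "(\<lambda>j. inverse (real (Suc j))) \<longlonglongrightarrow> 0" by (rule LIMSEQ_inverse_real_of_nat)
  qed
qed

lemma CT_orth_inf:
  assumes "\<And>j. Im (Z j) = real (Suc j)" "\<And>l. l < d \<Longrightarrow> ipm P l = 0"
  shows "(\<lambda>j. Z j ^ d * cauchyT w P (Z j)) \<longlonglongrightarrow> 0"
proof -
  have "Z j ^ d * cauchyT w P (Z j) = cauchyT w (monom 1 d * P) (Z j)" for j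
  proof -
    have "Im (Z j) \<noteq> 0" using assms(1)[of j] by simp
    then show ?thesis using CT_pow[of "Z j" d P] assms(2) by simp
  qed
  then show ?thesis using CT_inf[OF assms(1)] by simp
qed

end

lemma DERIV_eq_val: "(f has_field_derivative u1) F \<Longrightarrow> u1 = u2 \<Longrightarrow> (f has_field_derivative u2) F"
  by simp

locale sloc = sloc0 +
  fixes n :: nat and y :: complex and a b :: "nat \<Rightarrow> complex"
  assumes n: "n \<ge> 1" and ynz: "y \<noteq> 0"
    and lax: "\<And>z. Im z \<noteq> 0 \<Longrightarrow> \<forall>i j.
        ((\<lambda>\<zeta>. Phi m c wh n \<zeta> x $ i $ j) has_field_derivative
           (Alax m c n y a b z x ** Phi m c wh n z x) $ i $ j) (at z)"
begin

sublocale W: wt "weight m c wh x" Bw x by (rule wt_weight)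

abbreviation "ww \<equiv> weight m c wh x"
definition "p = OP ww n"
definition "q = OP ww (n - 1)"
definition "hN = hnorm ww n"
definition "h = hnorm ww (n - 1)"
definition "X = complex_of_real x"
definition "ea = complex_of_real (exp (x\<^sup>2 / 2))"
definition "ema = complex_of_real (exp (- (x\<^sup>2 / 2)))"
definition "E z = exp ((z + X)\<^sup>2 / 2)" for z
definition "Em z = exp (- (z + X)\<^sup>2 / 2)" for z
definition "tpi = 2 * complex_of_real pi * \<i>"
definition "F11 z = ema * (- cauchyT ww q (z + X) / complex_of_real h) * E z" for z
definition "F12 z = ema * (- tpi / complex_of_real h * cpoly q (z + X)) * Em z" for z
definition "F21 z = ea * (cauchyT ww p (z + X) / tpi) * E z" for z
definition "F22 z = ea * cpoly p (z + X) * Em z" for z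
definition "SA = (\<Sum>k=1..m. a k * b k)"
definition "A11 z = z + X + (\<Sum>k=1..m. a k * b k / (z - complex_of_real (c k)))" for z
definition "A12 z = y + (\<Sum>k=1..m. a k * y / (z - complex_of_real (c k)))" for z
definition "A21 z = - 2 * (SA + of_nat n) / y + (\<Sum>k=1..m. - a k * (b k)\<^sup>2 / y / (z - complex_of_real (c k)))" for z
definition "A22 z = - (z + X) + (\<Sum>k=1..m. - a k * b k / (z - complex_of_real (c k)))" for z

lemma h_pos: "0 < h" and hN_pos: "0 < hN"
  unfolding h_def hN_def by (rule W.hnorm_pos)+

lemma tpi_nz: "tpi \<noteq> 0" unfolding tpi_def by simp

lemma ea_ema: "ea * ema = 1" unfolding ea_def ema_def by (simp flip: of_real_mult add: exp_minus field_simps)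

lemma E_Em: "E z * Em z = 1" unfolding E_def Em_def by (simp flip: exp_add)

lemma Phi_ent: "Phi m c wh n z x = mat2 (F11 z) (F12 z) (F21 z) (F22 z)"
  unfolding Phi_eq F11_def F12_def F21_def F22_def ea_def ema_def E_def Em_def X_def tpi_def p_def q_def h_def
  by (simp add: exp_of_real[symmetric])

lemma Alax_ent: "Alax m c n y a b z x = mat2 (A11 z) (A12 z) (A21 z) (A22 z)"
  unfolding Alax_eq A11_def A12_def A21_def A22_def SA_def X_def ..

lemma A22_eq: "A22 z = - A11 z"
  unfolding A22_def A11_def by (simp add: sum_negf)

lemma derivs:
  assumes "Im z \<noteq> 0"
  shows "(F11 has_field_derivative A11 z * F11 z + A12 z * F21 z) (at z)"
    and "(F12 has_field_derivative A11 z * F12 z + A12 z * F22 z) (at z)"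
    and "(F21 has_field_derivative A21 z * F11 z + A22 z * F21 z) (at z)"
    and "(F22 has_field_derivative A21 z * F12 z + A22 z * F22 z) (at z)"
proof -
  note L = lax[OF assms]
  have f: "(\<lambda>\<zeta>. Phi m c wh n \<zeta> x $ 1 $ 1) = F11" "(\<lambda>\<zeta>. Phi m c wh n \<zeta> x $ 1 $ 2) = F12"
          "(\<lambda>\<zeta>. Phi m c wh n \<zeta> x $ 2 $ 1) = F21" "(\<lambda>\<zeta>. Phi m c wh n \<zeta> x $ 2 $ 2) = F22"
    unfolding Phi_ent mat2_nth by auto
  have v: "Alax m c n y a b z x ** Phi m c wh n z x = mat2 (A11 z * F11 z + A12 z * F21 z) (A11 z * F12 z + A12 z * F22 z)
        (A21 z * F11 z + A22 z * F21 z) (A21 z * F12 z + A22 z * F22 z)"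
    unfolding Phi_ent Alax_ent mat2_mult ..
  show "(F11 has_field_derivative A11 z * F11 z + A12 z * F21 z) (at z)"
    using L[rule_format, of 1 1] unfolding f v mat2_nth .
  show "(F12 has_field_derivative A11 z * F12 z + A12 z * F22 z) (at z)"
    using L[rule_format, of 1 2] unfolding f v mat2_nth .
  show "(F21 has_field_derivative A21 z * F11 z + A22 z * F21 z) (at z)"
    using L[rule_format, of 2 1] unfolding f v mat2_nth .
  show "(F22 has_field_derivative A21 z * F12 z + A22 z * F22 z) (at z)"
    using L[rule_format, of 2 2] unfolding f v mat2_nth .
qed

lemma CT_chain: assumes "Im (z + X) \<noteq> 0"
  shows "((\<lambda>z. cauchyT ww P (z + X)) has_field_derivative W.DT P (z + X)) (at z)"
  using DERIV_chain2[OF W.CT_deriv[OF assms] DERIV_add[OF DERIV_ident DERIV_const]] by simp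

lemma ImX: "Im (z + X) = Im z" unfolding X_def by simp

lemma E_deriv: "(E has_field_derivative E z * (z + X)) (at z)"
  unfolding E_def[abs_def] by (auto intro!: derivative_eq_intros simp: power2_eq_square algebra_simps)

lemma Em_deriv: "(Em has_field_derivative - (Em z * (z + X))) (at z)"
proof -
  have "((\<lambda>z. - (z + X)\<^sup>2 / 2) has_field_derivative - (z + X)) (at z)"
    by (auto intro!: derivative_eq_intros simp: power2_eq_square field_simps)
  from DERIV_chain2[OF DERIV_exp this] show ?thesis unfolding Em_def[abs_def]
    by (rule DERIV_eq_val) (simp add: algebra_simps)
qed

lemma cpoly_chain: "((\<lambda>z. cpoly P (z + X)) has_field_derivative poly (pderiv (map_poly complex_of_real P)) (z + X)) (at z)"
  using DERIV_chain2[OF cpoly_deriv DERIV_add[OF DERIV_ident DERIV_const]] by simp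

lemma eq11: assumes "Im z \<noteq> 0"
  shows "ema * (- (W.DT q (z + X) + (z + X) * cauchyT ww q (z + X)) / complex_of_real h) * E z = A11 z * F11 z + A12 z * F21 z"
proof -
  have "(F11 has_field_derivative ema * (- (W.DT q (z + X) + (z + X) * cauchyT ww q (z + X)) / complex_of_real h) * E z) (at z)"
  proof -
    have "(F11 has_field_derivative ema * (- W.DT q (z + X) / complex_of_real h) * E z + E z * (z + X) * (ema * (- cauchyT ww q (z + X) / complex_of_real h))) (at z)"
      unfolding F11_def[abs_def]
      by (rule DERIV_mult[OF DERIV_cmult[OF DERIV_cdivide[OF DERIV_minus[OF CT_chain]]] E_deriv]) (use assms ImX in auto)
    then show ?thesis by (rule DERIV_eq_val) (use h_pos tpi_nz in \<open>simp add: field_simps\<close>)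
  qed
  then show ?thesis using derivs(1)[OF assms] by (rule DERIV_unique)
qed

lemma eq21: assumes "Im z \<noteq> 0"
  shows "ea * ((W.DT p (z + X) + (z + X) * cauchyT ww p (z + X)) / tpi) * E z = A21 z * F11 z + A22 z * F21 z"
proof -
  have "(F21 has_field_derivative ea * ((W.DT p (z + X) + (z + X) * cauchyT ww p (z + X)) / tpi) * E z) (at z)"
  proof -
    have "(F21 has_field_derivative ea * (W.DT p (z + X) / tpi) * E z + E z * (z + X) * (ea * (cauchyT ww p (z + X) / tpi))) (at z)"
      unfolding F21_def[abs_def]
      by (rule DERIV_mult[OF DERIV_cmult[OF DERIV_cdivide[OF CT_chain]] E_deriv]) (use assms ImX in auto)
    then show ?thesis by (rule DERIV_eq_val) (use h_pos tpi_nz in \<open>simp add: field_simps\<close>)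
  qed
  then show ?thesis using derivs(3)[OF assms] by (rule DERIV_unique)
qed

lemma eq12: assumes "Im z \<noteq> 0"
  shows "ema * (- tpi / complex_of_real h) * (poly (pderiv (map_poly complex_of_real q)) (z + X) - (z + X) * cpoly q (z + X)) * Em z = A11 z * F12 z + A12 z * F22 z"
proof -
  have "(F12 has_field_derivative ema * (- tpi / complex_of_real h) * (poly (pderiv (map_poly complex_of_real q)) (z + X) - (z + X) * cpoly q (z + X)) * Em z) (at z)"
  proof -
    have "(F12 has_field_derivative ema * (- tpi / complex_of_real h * poly (pderiv (map_poly complex_of_real q)) (z + X)) * Em z + (- (Em z * (z + X))) * (ema * (- tpi / complex_of_real h * cpoly q (z + X)))) (at z)"
      unfolding F12_def[abs_def]
      by (rule DERIV_mult[OF DERIV_cmult[OF DERIV_cmult[OF cpoly_chain]] Em_deriv])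
    then show ?thesis by (rule DERIV_eq_val) (use h_pos tpi_nz in \<open>simp add: field_simps\<close>)
  qed
  then show ?thesis using derivs(2)[OF assms] by (rule DERIV_unique)
qed

end

context sloc begin

definition "Zi j = \<i> * complex_of_real (real (Suc j))" for j

lemma Im_Zi: "Im (Zi j) = real (Suc j)" and Im_Zi_X: "Im (Zi j + X) = real (Suc j)"
  unfolding Zi_def X_def by simp_all

lemma Zi_nz: "Im (Zi j) \<noteq> 0" "Im (Zi j + X) \<noteq> 0" using Im_Zi Im_Zi_X by auto

lemma zeta_inv: "(\<lambda>j. inverse (Zi j + X)) \<longlonglongrightarrow> 0" "\<And>j. Zi j + X \<noteq> 0"
  using W.inv_inf[of "\<lambda>j. Zi j + X", OF Im_Zi_X] by auto

lemma Zi_c_inv: "(\<lambda>j. inverse (Zi j - complex_of_real r)) \<longlonglongrightarrow> 0"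
  using W.inv_inf(1)[of "\<lambda>j. Zi j - complex_of_real r"] by (simp add: Zi_def)

lemma Zi_c_lim: "(\<lambda>j. C / (Zi j - complex_of_real r)) \<longlonglongrightarrow> 0"
  using tendsto_mult[OF tendsto_const Zi_c_inv, of C r] by (simp add: divide_inverse)

lemma deg_p: "degree p = n" and deg_q: "degree q = n - 1"
  and lc_p: "coeff p n = 1" and lc_q: "coeff q (n - 1) = 1"
  unfolding p_def q_def using W.OP_deg W.OP_lc by metis+

lemma ipm_p: "i < n \<Longrightarrow> W.ipm p i = 0" and ipm_q: "i < n - 1 \<Longrightarrow> W.ipm q i = 0"
  unfolding p_def q_def by (auto intro: W.ipm_OP_zero)

lemma ipm_p_self: "W.ipm p n = hN" and ipm_q_self: "W.ipm q (n - 1) = h"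
  unfolding p_def q_def hN_def h_def by (rule W.ipm_OP_self)+

lemma sum_q: "(\<Sum>i<n. \<zeta>^(n - 1 - i) * complex_of_real (W.ipm q i)) = complex_of_real h"
proof -
  have "(\<Sum>i<n. \<zeta>^(n - 1 - i) * complex_of_real (W.ipm q i)) = \<zeta>^(n - 1 - (n - 1)) * complex_of_real (W.ipm q (n - 1))"
    using n by (subst sum.remove[of _ "n - 1"]) (auto intro!: sum.neutral ipm_q)
  then show ?thesis using ipm_q_self by simp
qed

lemma sum_p: "(\<Sum>i<Suc n. \<zeta>^(Suc n - 1 - i) * complex_of_real (W.ipm p i)) = complex_of_real hN"
proof -
  have "(\<Sum>i<Suc n. \<zeta>^(Suc n - 1 - i) * complex_of_real (W.ipm p i)) = \<zeta>^(Suc n - 1 - n) * complex_of_real (W.ipm p n)"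
    by (subst sum.remove[of _ n]) (auto intro!: sum.neutral ipm_p)
  then show ?thesis using ipm_p_self by simp
qed

lemma lim_q_n: "(\<lambda>j. (Zi j + X)^n * cauchyT ww q (Zi j + X)) \<longlonglongrightarrow> - complex_of_real h"
proof -
  have "(Zi j + X)^n * cauchyT ww q (Zi j + X) = cauchyT ww (monom 1 n * q) (Zi j + X) - complex_of_real h" for j
    using W.CT_pow[OF Zi_nz(2), where d=n and P=q] sum_q by simp
  moreover have "(\<lambda>j. cauchyT ww (monom 1 n * q) (Zi j + X) - complex_of_real h) \<longlonglongrightarrow> 0 - complex_of_real h"
    by (intro tendsto_intros W.CT_inf Im_Zi_X)
  ultimately show ?thesis by simp
qed

lemma lim_p_n1: "(\<lambda>j. (Zi j + X)^(Suc n) * cauchyT ww p (Zi j + X)) \<longlonglongrightarrow> - complex_of_real hN"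
proof -
  have "(Zi j + X)^(Suc n) * cauchyT ww p (Zi j + X) = cauchyT ww (monom 1 (Suc n) * p) (Zi j + X) - complex_of_real hN" for j
    using W.CT_pow[OF Zi_nz(2), where d="Suc n" and P=p] sum_p by simp
  moreover have "(\<lambda>j. cauchyT ww (monom 1 (Suc n) * p) (Zi j + X) - complex_of_real hN) \<longlonglongrightarrow> 0 - complex_of_real hN"
    by (intro tendsto_intros W.CT_inf Im_Zi_X)
  ultimately show ?thesis by simp
qed

lemma lim_p_n: "(\<lambda>j. (Zi j + X)^n * cauchyT ww p (Zi j + X)) \<longlonglongrightarrow> 0"
  using W.CT_orth_inf[OF Im_Zi_X, of n p] ipm_p by simp

lemma lim_p_nm1: "(\<lambda>j. (Zi j + X)^(n - 1) * cauchyT ww p (Zi j + X)) \<longlonglongrightarrow> 0"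
  using W.CT_orth_inf[OF Im_Zi_X, of "n - 1" p] ipm_p by simp

lemma lim_DT_p: "(\<lambda>j. (Zi j + X)^n * W.DT p (Zi j + X)) \<longlonglongrightarrow> 0"
proof -
  have eq: "(Zi j + X)^n * W.DT p (Zi j + X) = W.DT (monom 1 n * p) (Zi j + X) -
      (\<Sum>i<n. inverse (Zi j + X) * ((Zi j + X)^(n - i) * cauchyT ww (monom 1 i * p) (Zi j + X)))" for j
  proof -
    have "(Zi j + X)^(n - 1 - i) = inverse (Zi j + X) * (Zi j + X)^(n - i)" if "i < n" for i
    proof -
      have "n - i = Suc (n - 1 - i)" using that by simp
      then show ?thesis using zeta_inv(2)[of j] by simp
    qed
    then show ?thesis using W.DT_pow[OF Zi_nz(2), where d=n and P=p] by (simp add: mult.assoc)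
  qed
  have lim_i: "(\<lambda>j. (Zi j + X)^(n - i) * cauchyT ww (monom 1 i * p) (Zi j + X)) \<longlonglongrightarrow> 0" if "i < n" for i
  proof (rule W.CT_orth_inf[OF Im_Zi_X])
    fix l assume "l < n - i"
    then show "W.ipm (monom 1 i * p) l = 0" using ipm_p[of "i + l"] W.ipm_monom by simp
  qed
  have "(\<lambda>j. W.DT (monom 1 n * p) (Zi j + X) -
      (\<Sum>i<n. inverse (Zi j + X) * ((Zi j + X)^(n - i) * cauchyT ww (monom 1 i * p) (Zi j + X)))) \<longlonglongrightarrow> 0 - (\<Sum>i<n. 0 * 0)"
    using lim_i by (intro tendsto_intros W.DT_inf Im_Zi_X zeta_inv tendsto_sum) auto
  then show ?thesis unfolding eq by simp
qed

lemma poly_lims: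
  "(\<lambda>j. cpoly p (Zi j + X) / (Zi j + X)^n) \<longlonglongrightarrow> 1"
  "(\<lambda>j. cpoly q (Zi j + X) / (Zi j + X)^(n - 1)) \<longlonglongrightarrow> 1"
  "(\<lambda>j. cpoly q (Zi j + X) / (Zi j + X)^n) \<longlonglongrightarrow> 0"
  "(\<lambda>j. poly (pderiv (map_poly complex_of_real q)) (Zi j + X) / (Zi j + X)^n) \<longlonglongrightarrow> 0"
proof -
  show "(\<lambda>j. cpoly p (Zi j + X) / (Zi j + X)^n) \<longlonglongrightarrow> 1"
    using cpoly_asym[of p n, OF _ zeta_inv] deg_p lc_p by simp
  show "(\<lambda>j. cpoly q (Zi j + X) / (Zi j + X)^(n - 1)) \<longlonglongrightarrow> 1"
    using cpoly_asym[of q "n - 1", OF _ zeta_inv] deg_q lc_q by simp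
  show "(\<lambda>j. cpoly q (Zi j + X) / (Zi j + X)^n) \<longlonglongrightarrow> 0"
    using cpoly_asym[of q n, OF _ zeta_inv] deg_q n by (simp add: coeff_eq_0)
  show "(\<lambda>j. poly (pderiv (map_poly complex_of_real q)) (Zi j + X) / (Zi j + X)^n) \<longlonglongrightarrow> 0"
    using cpoly_pderiv_asym[of q n, OF _ zeta_inv] deg_q by simp
qed

lemma det_formula: "F11 z * F22 z - F12 z * F21 z =
    (cpoly q (z + X) * cauchyT ww p (z + X) - cpoly p (z + X) * cauchyT ww q (z + X)) / complex_of_real h"
proof -
  have "F11 z * F22 z - F12 z * F21 z = (ea * ema) * (E z * Em z) *
    ((cpoly q (z + X) * cauchyT ww p (z + X) - cpoly p (z + X) * cauchyT ww q (z + X)) / complex_of_real h)"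
    unfolding F11_def F12_def F21_def F22_def using tpi_nz h_pos by (simp add: field_simps)
  then show ?thesis unfolding ea_ema E_Em by simp
qed

lemma det_one: assumes "0 < Im z" shows "F11 z * F22 z - F12 z * F21 z = 1"
proof -
  define D where "D z = F11 z * F22 z - F12 z * F21 z" for z
  have "\<exists>C. \<forall>z\<in>{z. 0 < Im z}. D z = C"
  proof (rule has_field_derivative_zero_constant)
    show "convex {z. 0 < Im z}" by (rule convex_halfspace_Im_gt)
    fix z assume "z \<in> {z. 0 < Im z}"
    then have z: "Im z \<noteq> 0" by simp
    have "(D has_field_derivative
      ((A11 z * F11 z + A12 z * F21 z) * F22 z + (A21 z * F12 z + A22 z * F22 z) * F11 z -
       ((A11 z * F12 z + A12 z * F22 z) * F21 z + (A21 z * F11 z + A22 z * F21 z) * F12 z))) (at z)"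
      unfolding D_def[abs_def] using derivs[OF z] by (intro DERIV_diff DERIV_mult)
    then have "(D has_field_derivative 0) (at z)"
      by (rule DERIV_eq_val) (simp add: A22_eq algebra_simps)
    then show "(D has_field_derivative 0) (at z within {z. 0 < Im z})"
      by (rule has_field_derivative_at_within)
  qed
  then obtain C where C: "\<And>z. 0 < Im z \<Longrightarrow> D z = C" by auto
  have eq: "D (Zi j) = ((cpoly q (Zi j + X) / (Zi j + X)^(n - 1)) * ((Zi j + X)^(n - 1) * cauchyT ww p (Zi j + X))
      - (cpoly p (Zi j + X) / (Zi j + X)^n) * ((Zi j + X)^n * cauchyT ww q (Zi j + X))) / complex_of_real h" for j
    unfolding D_def det_formula using zeta_inv(2)[of j] by simp
  have "(\<lambda>j. D (Zi j)) \<longlonglongrightarrow> (1 * 0 - 1 * (- complex_of_real h)) / complex_of_real h"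
    unfolding eq using h_pos by (intro tendsto_intros poly_lims lim_p_nm1 lim_q_n) auto
  then have "(\<lambda>j. D (Zi j)) \<longlonglongrightarrow> 1" using h_pos by simp
  moreover have "D (Zi j) = C" for j using C Im_Zi[of j] by simp
  ultimately have "C = 1" using LIMSEQ_unique by fastforce
  then show ?thesis using C[OF assms] unfolding D_def by simp
qed

end

lemma alg_y:
  fixes K Q' Q A B e P \<zeta> :: complex
  assumes "\<zeta> \<noteq> 0" "K * (Q' - \<zeta> * Q) = A * (K * Q) + B * (e * P)"
  shows "K * (Q' / (\<zeta> * \<zeta>^N) - Q / \<zeta>^N) = (A / \<zeta>) * K * (Q / \<zeta>^N) + B * e * (P / (\<zeta> * \<zeta>^N))"
  using assms by (simp add: field_simps)

context sloc begin

definition "S1 z = (\<Sum>k=1..m. a k * b k / (z - complex_of_real (c k)))" for z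

lemma S1_lim: "(\<lambda>j. S1 (Zi j)) \<longlonglongrightarrow> 0"
proof -
  have "(\<lambda>j. S1 (Zi j)) \<longlonglongrightarrow> (\<Sum>k=1..m. 0)"
    unfolding S1_def by (intro tendsto_sum Zi_c_lim)
  then show ?thesis by simp
qed

lemma A11_S1: "A11 z = z + X + S1 z" unfolding A11_def S1_def ..
lemma A22_S1: "A22 z = - (z + X) - S1 z" unfolding A22_def S1_def by (simp add: sum_negf)

lemma A12_lim: "(\<lambda>j. A12 (Zi j)) \<longlonglongrightarrow> y"
proof -
  have "(\<lambda>j. A12 (Zi j)) \<longlonglongrightarrow> y + (\<Sum>k=1..m. 0)"
    unfolding A12_def by (intro tendsto_intros tendsto_sum Zi_c_lim)
  then show ?thesis by simp
qed

definition "Ainf = - 2 * (SA + of_nat n) / y"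

lemma A21_lim: "(\<lambda>j. A21 (Zi j)) \<longlonglongrightarrow> Ainf"
proof -
  have "(\<lambda>j. \<Sum>k=1..m. (- a k * (b k)\<^sup>2 / y) / (Zi j - complex_of_real (c k))) \<longlonglongrightarrow> (\<Sum>k=1..m. 0)"
    by (rule tendsto_sum) (rule Zi_c_lim)
  then have "(\<lambda>j. A21 (Zi j)) \<longlonglongrightarrow> Ainf + (\<Sum>k=1..m. 0)"
    unfolding A21_def Ainf_def by (intro tendsto_add tendsto_const)
  then show ?thesis by simp
qed

lemma Em_nz: "Em z \<noteq> 0" and E_nz: "E z \<noteq> 0" unfolding Em_def E_def by simp_all

lemma y_val: "y = 2 * ema * tpi / (complex_of_real h * ea)"
proof -
  define K where "K = ema * (- tpi / complex_of_real h)"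
  obtain N where N: "n = Suc N" using n by (cases n) auto
  define \<zeta> where "\<zeta> j = Zi j + X" for j
  have ident: "K * (poly (pderiv (map_poly complex_of_real q)) (\<zeta> j) / (\<zeta> j * \<zeta> j^N) - cpoly q (\<zeta> j) / \<zeta> j^N)
      = (A11 (Zi j) / \<zeta> j) * K * (cpoly q (\<zeta> j) / \<zeta> j^N) + A12 (Zi j) * ea * (cpoly p (\<zeta> j) / (\<zeta> j * \<zeta> j^N))" for j
  proof (rule alg_y)
    show "\<zeta> j \<noteq> 0" unfolding \<zeta>_def by (rule zeta_inv(2))
    have e: "K * (poly (pderiv (map_poly complex_of_real q)) (\<zeta> j) - \<zeta> j * cpoly q (\<zeta> j)) * Em (Zi j) =
        (A11 (Zi j) * (K * cpoly q (\<zeta> j)) + A12 (Zi j) * (ea * cpoly p (\<zeta> j))) * Em (Zi j)"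
      using eq12[OF Zi_nz(1)] unfolding F12_def F22_def K_def \<zeta>_def by (simp add: algebra_simps)
    show "K * (poly (pderiv (map_poly complex_of_real q)) (\<zeta> j) - \<zeta> j * cpoly q (\<zeta> j)) =
        A11 (Zi j) * (K * cpoly q (\<zeta> j)) + A12 (Zi j) * (ea * cpoly p (\<zeta> j))"
      using e Em_nz by simp
  qed
  have A11z: "A11 (Zi j) / \<zeta> j = 1 + inverse (\<zeta> j) * S1 (Zi j)" for j
    unfolding A11_S1 \<zeta>_def using zeta_inv(2)[of j] by (simp add: field_simps)
  have l1: "(\<lambda>j. K * (poly (pderiv (map_poly complex_of_real q)) (\<zeta> j) / (\<zeta> j * \<zeta> j^N) - cpoly q (\<zeta> j) / \<zeta> j^N)) \<longlonglongrightarrow> K * (0 - 1)"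
    using poly_lims(2,4) unfolding \<zeta>_def N by (intro tendsto_intros) auto
  have l2: "(\<lambda>j. (A11 (Zi j) / \<zeta> j) * K * (cpoly q (\<zeta> j) / \<zeta> j^N) + A12 (Zi j) * ea * (cpoly p (\<zeta> j) / (\<zeta> j * \<zeta> j^N)))
       \<longlonglongrightarrow> (1 + 0 * 0) * K * 1 + y * ea * 1"
    unfolding A11z using poly_lims(1,2) zeta_inv(1) S1_lim A12_lim unfolding \<zeta>_def N
    by (intro tendsto_intros) auto
  have "K * (0 - 1) = (1 + 0 * 0) * K * 1 + y * ea * 1"
    using LIMSEQ_unique[OF l1] l2 unfolding ident by blast
  then have "y * ea = - 2 * K" by (auto simp: algebra_simps eq_neg_iff_add_eq_0)
  moreover have "ea \<noteq> 0" unfolding ea_def by simp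
  ultimately show ?thesis unfolding K_def using h_pos by (simp add: field_simps)
qed

lemma alg_SA:
  fixes ea' tpi' D C Cq A21' A22' S \<zeta> ema' h' EE :: complex
  assumes "EE \<noteq> 0" "ea' * ((D + \<zeta> * C) / tpi') * EE = A21' * (ema' * (- Cq / h') * EE) + A22' * (ea' * (C / tpi') * EE)"
    "A22' = - \<zeta> - S"
  shows "(ea' / tpi') * (\<zeta>^n * D + \<zeta>^(Suc n) * C) = - A21' * (ema' / h') * (\<zeta>^n * Cq) - (ea' / tpi') * (\<zeta>^(Suc n) * C) - S * (ea' / tpi') * (\<zeta>^n * C)"
proof -
  have "ea' * ((D + \<zeta> * C) / tpi') = A21' * (ema' * (- Cq / h')) + A22' * (ea' * (C / tpi'))"
    using assms(1,2) by (metis (no_types, lifting) distrib_right mult.assoc mult_cancel_right)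
  then have z: "ea' * ((D + \<zeta> * C) / tpi') - (A21' * (ema' * (- Cq / h')) + (- \<zeta> - S) * (ea' * (C / tpi'))) = 0"
    unfolding assms(3) by simp
  have "(ea' / tpi') * (\<zeta>^n * D + \<zeta>^(Suc n) * C) - (- A21' * (ema' / h') * (\<zeta>^n * Cq) - (ea' / tpi') * (\<zeta>^(Suc n) * C) - S * (ea' / tpi') * (\<zeta>^n * C))
    = \<zeta>^n * (ea' * ((D + \<zeta> * C) / tpi') - (A21' * (ema' * (- Cq / h')) + (- \<zeta> - S) * (ea' * (C / tpi'))))"
    by (simp add: divide_inverse algebra_simps)
  then show ?thesis unfolding z by simp
qed

lemma SA_val: "SA + of_nat n = complex_of_real (2 * hN / h)"
proof -
  define \<zeta> where "\<zeta> j = Zi j + X" for j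
  have ident: "(ea / tpi) * (\<zeta> j^n * W.DT p (\<zeta> j) + \<zeta> j^(Suc n) * cauchyT ww p (\<zeta> j)) =
     - A21 (Zi j) * (ema / complex_of_real h) * (\<zeta> j^n * cauchyT ww q (\<zeta> j)) - (ea / tpi) * (\<zeta> j^(Suc n) * cauchyT ww p (\<zeta> j))
     - S1 (Zi j) * (ea / tpi) * (\<zeta> j^n * cauchyT ww p (\<zeta> j))" for j
    using alg_SA[OF E_nz eq21[OF Zi_nz(1), unfolded F11_def F21_def] A22_S1] unfolding \<zeta>_def .
  have l1: "(\<lambda>j. (ea / tpi) * (\<zeta> j^n * W.DT p (\<zeta> j) + \<zeta> j^(Suc n) * cauchyT ww p (\<zeta> j))) \<longlonglongrightarrow> (ea / tpi) * (0 + - complex_of_real hN)"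
    unfolding \<zeta>_def by (intro tendsto_intros lim_DT_p lim_p_n1)
  have l2: "(\<lambda>j. - A21 (Zi j) * (ema / complex_of_real h) * (\<zeta> j^n * cauchyT ww q (\<zeta> j)) - (ea / tpi) * (\<zeta> j^(Suc n) * cauchyT ww p (\<zeta> j))
     - S1 (Zi j) * (ea / tpi) * (\<zeta> j^n * cauchyT ww p (\<zeta> j))) \<longlonglongrightarrow>
     - Ainf * (ema / complex_of_real h) * (- complex_of_real h) - (ea / tpi) * (- complex_of_real hN) - 0 * (ea / tpi) * 0"
    unfolding \<zeta>_def by (intro tendsto_intros A21_lim lim_q_n lim_p_n1 S1_lim lim_p_n)
  have "(ea / tpi) * (0 + - complex_of_real hN) = - Ainf * (ema / complex_of_real h) * (- complex_of_real h) - (ea / tpi) * (- complex_of_real hN) - 0 * (ea / tpi) * 0"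
    using LIMSEQ_unique[OF l1] l2 unfolding ident by blast
  then have "ema * Ainf + ea * (2 * complex_of_real hN) / tpi = 0" using h_pos by (simp add: field_simps)
  then have "ema * Ainf = - (ea * (2 * complex_of_real hN) / tpi)"
    by (simp only: eq_neg_iff_add_eq_0)
  then have "Ainf * ema = - 2 * (ea / tpi) * complex_of_real hN"
    by (simp add: algebra_simps)
  then have "- 2 * (SA + of_nat n) / y * ema = - 2 * (ea / tpi) * complex_of_real hN" unfolding Ainf_def .
  then have h1: "-2 * ((SA + of_nat n) / y * ema) = -2 * ((ea / tpi) * complex_of_real hN)"
    by (simp add: algebra_simps)
  have "(SA + of_nat n) / y * ema = (ea / tpi) * complex_of_real hN"
    by (rule mult_left_cancel[THEN iffD1, OF _ h1]) simp
  moreover have "ema \<noteq> 0" unfolding ema_def by simp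
  ultimately have "SA + of_nat n = y * ea * complex_of_real hN / (tpi * ema)"
    using ynz tpi_nz by (simp add: field_simps)
  also have "\<dots> = complex_of_real (2 * hN / h)" unfolding y_val using h_pos tpi_nz
    by (simp add: field_simps ema_def ea_def)
  finally show ?thesis .
qed

end

lemma cpoly_of_real: "cpoly P (complex_of_real r) = complex_of_real (poly P r)"
  unfolding cpoly_def by (induction P) (auto simp: map_poly_pCons)

lemma cpoly_tendsto: "(Z \<longlongrightarrow> z0) F \<Longrightarrow> ((\<lambda>j. cpoly P (Z j)) \<longlongrightarrow> cpoly P z0) F"
  unfolding cpoly_def by (rule tendsto_poly)

locale slock = sloc +
  fixes k :: nat
  assumes k1: "1 \<le> k" and k2: "k \<le> m"
begin

definition "t = tpt c x k"
definition "ck = complex_of_real (c k)"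
definition "e j = 1 / real (Suc j)" for j
definition "zk j = ck + \<i> * complex_of_real (e j)" for j
definition "J = jump wh k"

lemma e_pos: "0 < e j" and e_le1: "e j \<le> 1" unfolding e_def by auto

lemma e_lim: "e \<longlonglongrightarrow> 0"
  unfolding e_def using LIMSEQ_inverse_real_of_nat by (simp add: divide_inverse)

lemma zkX: "zk j + X = complex_of_real t + \<i> * complex_of_real (e j)"
  unfolding zk_def ck_def X_def t_def tpt_def by simp

lemma Im_zk: "Im (zk j) = e j" unfolding zk_def ck_def by simp
lemma zk_pos: "0 < Im (zk j)" using Im_zk[of j] e_pos[of j] by simp
lemma zk_nz: "Im (zk j) \<noteq> 0" using zk_pos[of j] by simp

lemma zk_lim: "zk \<longlonglongrightarrow> ck"
proof -
  have "zk \<longlonglongrightarrow> ck + \<i> * complex_of_real 0" unfolding zk_def[abs_def] by (intro tendsto_intros e_lim)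
  then show ?thesis by simp
qed

lemma zk_ck: "zk j - ck = \<i> * complex_of_real (e j)" unfolding zk_def by simp

lemma ckX: "ck + X = complex_of_real t" unfolding ck_def X_def t_def tpt_def by simp

lemma CT_lim_k: "(\<lambda>j. complex_of_real (e j) * cauchyT ww P (zk j + X)) \<longlonglongrightarrow> 0"
  unfolding zkX using W.CT_eps[where e=e and t=t and P=P] e_pos e_lim by auto

lemma DT_lim_k: "(\<lambda>j. complex_of_real (e j) * W.DT P (zk j + X)) \<longlonglongrightarrow> \<i> * complex_of_real (J * (poly P t * exp (- t\<^sup>2)))"
proof -
  obtain d sm where d: "0 < d"
    "\<And>s. t - d < s \<Longrightarrow> s < t \<Longrightarrow> ww s = exp (- s\<^sup>2) * sm"
    "\<And>s. t < s \<Longrightarrow> s < t + d \<Longrightarrow> ww s = exp (- s\<^sup>2) * (sm + jump wh k)"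
    using local_structure[OF k1 k2] unfolding t_def by metis
  have "(\<lambda>j. complex_of_real (e j) * W.DT P (complex_of_real t + \<i> * complex_of_real (e j)))
      \<longlonglongrightarrow> \<i> * complex_of_real ((sm + jump wh k - sm) * (poly P t * exp (- t\<^sup>2)))"
    by (rule W.DT_eps[OF e_pos e_le1 e_lim d(1)]) (use d in auto)
  then show ?thesis unfolding zkX J_def by simp
qed

lemma c_ne: "i \<in> {1..m} - {k} \<Longrightarrow> ck - complex_of_real (c i) \<noteq> 0"
  unfolding ck_def using c_inj[of i k] k1 k2 by auto

definition "R11 z = z + X + (\<Sum>i\<in>{1..m} - {k}. a i * b i / (z - complex_of_real (c i)))" for z
definition "R12 z = y + (\<Sum>i\<in>{1..m} - {k}. a i * y / (z - complex_of_real (c i)))" for z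
definition "R21 z = - 2 * (SA + of_nat n) / y + (\<Sum>i\<in>{1..m} - {k}. - a i * (b i)\<^sup>2 / y / (z - complex_of_real (c i)))" for z
definition "R22 z = - (z + X) + (\<Sum>i\<in>{1..m} - {k}. - a i * b i / (z - complex_of_real (c i)))" for z

lemma sum_split_k: "(\<Sum>i=1..m. f i) = f k + (\<Sum>i\<in>{1..m} - {k}. f i)"
  using k1 k2 by (subst sum.remove[of _ k]) auto

lemma A_split:
  assumes "z \<noteq> ck"
  shows "(z - ck) * A11 z = a k * b k + (z - ck) * R11 z"
    and "(z - ck) * A12 z = a k * y + (z - ck) * R12 z"
    and "(z - ck) * A21 z = - a k * (b k)\<^sup>2 / y + (z - ck) * R21 z"
    and "(z - ck) * A22 z = - a k * b k + (z - ck) * R22 z"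
proof -
  have nz: "z - ck \<noteq> 0" using assms by simp
  show "(z - ck) * A11 z = a k * b k + (z - ck) * R11 z"
    unfolding A11_def R11_def sum_split_k[of "\<lambda>i. a i * b i / (z - complex_of_real (c i))"] ck_def
    using nz ynz unfolding ck_def by (simp add: field_simps)
  show "(z - ck) * A12 z = a k * y + (z - ck) * R12 z"
    unfolding A12_def R12_def sum_split_k[of "\<lambda>i. a i * y / (z - complex_of_real (c i))"]
    using nz ynz unfolding ck_def by (simp add: field_simps)
  show "(z - ck) * A21 z = - a k * (b k)\<^sup>2 / y + (z - ck) * R21 z"
    unfolding A21_def R21_def sum_split_k[of "\<lambda>i. - a i * (b i)\<^sup>2 / y / (z - complex_of_real (c i))"]
    using nz ynz unfolding ck_def by (simp add: field_simps)
  show "(z - ck) * A22 z = - a k * b k + (z - ck) * R22 z"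
    unfolding A22_def R22_def sum_split_k[of "\<lambda>i. - a i * b i / (z - complex_of_real (c i))"]
    using nz ynz unfolding ck_def by (simp add: field_simps)
qed

lemma zk_ne: "zk j \<noteq> ck" using zk_ck[of j] e_pos[of j] by auto

lemma R_lim: "convergent (\<lambda>j. R11 (zk j))" "convergent (\<lambda>j. R12 (zk j))"
   "convergent (\<lambda>j. R21 (zk j))" "convergent (\<lambda>j. R22 (zk j))"
proof -
  have s: "(\<lambda>j. \<Sum>i\<in>{1..m} - {k}. C i / (zk j - complex_of_real (c i))) \<longlonglongrightarrow> (\<Sum>i\<in>{1..m} - {k}. C i / (ck - complex_of_real (c i)))" for C
    using c_ne by (intro tendsto_sum tendsto_intros zk_lim) auto
  show "convergent (\<lambda>j. R11 (zk j))" unfolding R11_def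
    by (rule convergentI, rule tendsto_add[OF tendsto_add[OF zk_lim tendsto_const] s])
  show "convergent (\<lambda>j. R12 (zk j))" unfolding R12_def
    by (rule convergentI, rule tendsto_add[OF tendsto_const s])
  show "convergent (\<lambda>j. R21 (zk j))" unfolding R21_def
    by (rule convergentI, rule tendsto_add[OF tendsto_const s])
  show "convergent (\<lambda>j. R22 (zk j))" unfolding R22_def
    by (rule convergentI, rule tendsto_add[OF tendsto_minus[OF tendsto_add[OF zk_lim tendsto_const]] s])
qed

lemma E_lim: "(\<lambda>j. E (zk j)) \<longlonglongrightarrow> E ck" "(\<lambda>j. Em (zk j)) \<longlonglongrightarrow> Em ck"
  unfolding E_def Em_def by (intro tendsto_intros zk_lim; simp)+

lemma F11_small: "(\<lambda>j. (zk j - ck) * F11 (zk j)) \<longlonglongrightarrow> 0"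
proof -
  have eq: "(zk j - ck) * F11 (zk j) = ema * (- 1 / complex_of_real h) * E (zk j) * (\<i> * (complex_of_real (e j) * cauchyT ww q (zk j + X)))" for j
    unfolding zk_ck F11_def by (simp add: algebra_simps)
  have "(\<lambda>j. ema * (- 1 / complex_of_real h) * E (zk j) * (\<i> * (complex_of_real (e j) * cauchyT ww q (zk j + X)))) \<longlonglongrightarrow> ema * (- 1 / complex_of_real h) * E ck * (\<i> * 0)"
    by (intro tendsto_intros E_lim CT_lim_k)
  then show ?thesis unfolding eq by simp
qed

lemma F21_small: "(\<lambda>j. (zk j - ck) * F21 (zk j)) \<longlonglongrightarrow> 0"
proof -
  have eq: "(zk j - ck) * F21 (zk j) = ea / tpi * E (zk j) * (\<i> * (complex_of_real (e j) * cauchyT ww p (zk j + X)))" for j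
    unfolding zk_ck F21_def by (simp add: algebra_simps)
  have "(\<lambda>j. ea / tpi * E (zk j) * (\<i> * (complex_of_real (e j) * cauchyT ww p (zk j + X)))) \<longlonglongrightarrow> ea / tpi * E ck * (\<i> * 0)"
    by (intro tendsto_intros E_lim CT_lim_k)
  then show ?thesis unfolding eq by simp
qed

lemma F12_lim: "(\<lambda>j. F12 (zk j)) \<longlonglongrightarrow> F12 ck" and F22_lim: "(\<lambda>j. F22 (zk j)) \<longlonglongrightarrow> F22 ck"
  unfolding F12_def F22_def by (intro tendsto_intros cpoly_tendsto zk_lim E_lim)+

definition "L1 = ema * (- (\<i> * (\<i> * complex_of_real (J * (poly q t * exp (- t\<^sup>2))))) / complex_of_real h) * E ck"
definition "L2 = ea * ((\<i> * (\<i> * complex_of_real (J * (poly p t * exp (- t\<^sup>2))))) / tpi) * E ck"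

lemma lhs11_lim: "(\<lambda>j. (zk j - ck) * (ema * (- (W.DT q (zk j + X) + (zk j + X) * cauchyT ww q (zk j + X)) / complex_of_real h) * E (zk j))) \<longlonglongrightarrow> L1"
proof -
  have eq: "(zk j - ck) * (ema * (- (W.DT q (zk j + X) + (zk j + X) * cauchyT ww q (zk j + X)) / complex_of_real h) * E (zk j))
     = ema * (- (\<i> * (complex_of_real (e j) * W.DT q (zk j + X)) + (zk j + X) * (\<i> * (complex_of_real (e j) * cauchyT ww q (zk j + X)))) / complex_of_real h) * E (zk j)" for j
    unfolding zk_ck by (simp add: algebra_simps)
  have "(\<lambda>j. ema * (- (\<i> * (complex_of_real (e j) * W.DT q (zk j + X)) + (zk j + X) * (\<i> * (complex_of_real (e j) * cauchyT ww q (zk j + X)))) / complex_of_real h) * E (zk j))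
     \<longlonglongrightarrow> ema * (- (\<i> * (\<i> * complex_of_real (J * (poly q t * exp (- t\<^sup>2)))) + (ck + X) * (\<i> * 0)) / complex_of_real h) * E ck"
    using h_pos by (intro tendsto_mult[OF tendsto_mult[OF tendsto_const tendsto_divide[OF tendsto_minus[OF tendsto_add[OF
        tendsto_mult[OF tendsto_const DT_lim_k] tendsto_mult[OF tendsto_add[OF zk_lim tendsto_const] tendsto_mult[OF tendsto_const CT_lim_k]]]] tendsto_const]] E_lim(1)]) auto
  then show ?thesis unfolding eq L1_def by simp
qed

lemma lhs21_lim: "(\<lambda>j. (zk j - ck) * (ea * ((W.DT p (zk j + X) + (zk j + X) * cauchyT ww p (zk j + X)) / tpi) * E (zk j))) \<longlonglongrightarrow> L2"
proof -
  have eq: "(zk j - ck) * (ea * ((W.DT p (zk j + X) + (zk j + X) * cauchyT ww p (zk j + X)) / tpi) * E (zk j))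
     = ea * ((\<i> * (complex_of_real (e j) * W.DT p (zk j + X)) + (zk j + X) * (\<i> * (complex_of_real (e j) * cauchyT ww p (zk j + X)))) / tpi) * E (zk j)" for j
    unfolding zk_ck by (simp add: algebra_simps)
  have "(\<lambda>j. ea * ((\<i> * (complex_of_real (e j) * W.DT p (zk j + X)) + (zk j + X) * (\<i> * (complex_of_real (e j) * cauchyT ww p (zk j + X)))) / tpi) * E (zk j))
     \<longlonglongrightarrow> ea * ((\<i> * (\<i> * complex_of_real (J * (poly p t * exp (- t\<^sup>2)))) + (ck + X) * (\<i> * 0)) / tpi) * E ck"
    using tpi_nz by (intro tendsto_mult[OF tendsto_mult[OF tendsto_const tendsto_divide[OF tendsto_add[OF
        tendsto_mult[OF tendsto_const DT_lim_k] tendsto_mult[OF tendsto_add[OF zk_lim tendsto_const] tendsto_mult[OF tendsto_const CT_lim_k]]] tendsto_const]] E_lim(1)]) auto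
  then show ?thesis unfolding eq L2_def by simp
qed

definition "S j = b k * F11 (zk j) + y * F21 (zk j)" for j

lemma conv_small: "convergent f \<Longrightarrow> g \<longlonglongrightarrow> 0 \<Longrightarrow> (\<lambda>j. f j * g j) \<longlonglongrightarrow> (0::complex)"
  unfolding convergent_def using tendsto_mult by fastforce

lemma aS_lim: "(\<lambda>j. a k * S j) \<longlonglongrightarrow> L1"
proof -
  have eq: "a k * S j = (zk j - ck) * (ema * (- (W.DT q (zk j + X) + (zk j + X) * cauchyT ww q (zk j + X)) / complex_of_real h) * E (zk j))
      - R11 (zk j) * ((zk j - ck) * F11 (zk j)) - R12 (zk j) * ((zk j - ck) * F21 (zk j))" for j
  proof -
    have "(zk j - ck) * (ema * (- (W.DT q (zk j + X) + (zk j + X) * cauchyT ww q (zk j + X)) / complex_of_real h) * E (zk j))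
        = ((zk j - ck) * A11 (zk j)) * F11 (zk j) + ((zk j - ck) * A12 (zk j)) * F21 (zk j)"
      unfolding eq11[OF zk_nz] by (simp add: algebra_simps)
    also have "\<dots> = a k * S j + R11 (zk j) * ((zk j - ck) * F11 (zk j)) + R12 (zk j) * ((zk j - ck) * F21 (zk j))"
      unfolding A_split[OF zk_ne] S_def by (simp add: algebra_simps)
    finally show ?thesis by simp
  qed
  have "(\<lambda>j. (zk j - ck) * (ema * (- (W.DT q (zk j + X) + (zk j + X) * cauchyT ww q (zk j + X)) / complex_of_real h) * E (zk j))
      - R11 (zk j) * ((zk j - ck) * F11 (zk j)) - R12 (zk j) * ((zk j - ck) * F21 (zk j))) \<longlonglongrightarrow> L1 - 0 - 0"
    by (intro tendsto_diff lhs11_lim conv_small R_lim F11_small F21_small)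
  then show ?thesis unfolding eq by simp
qed

lemma bS_lim: "(\<lambda>j. - (a k * b k / y) * S j) \<longlonglongrightarrow> L2"
proof -
  have eq: "- (a k * b k / y) * S j = (zk j - ck) * (ea * ((W.DT p (zk j + X) + (zk j + X) * cauchyT ww p (zk j + X)) / tpi) * E (zk j))
      - R21 (zk j) * ((zk j - ck) * F11 (zk j)) - R22 (zk j) * ((zk j - ck) * F21 (zk j))" for j
  proof -
    have "(zk j - ck) * (ea * ((W.DT p (zk j + X) + (zk j + X) * cauchyT ww p (zk j + X)) / tpi) * E (zk j))
        = ((zk j - ck) * A21 (zk j)) * F11 (zk j) + ((zk j - ck) * A22 (zk j)) * F21 (zk j)"
      unfolding eq21[OF zk_nz] by (simp add: algebra_simps)
    also have "\<dots> = - (a k * b k / y) * S j + R21 (zk j) * ((zk j - ck) * F11 (zk j)) + R22 (zk j) * ((zk j - ck) * F21 (zk j))"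
      unfolding A_split[OF zk_ne] S_def using ynz by (simp add: field_simps power2_eq_square)
    finally show ?thesis by simp
  qed
  have "(\<lambda>j. (zk j - ck) * (ea * ((W.DT p (zk j + X) + (zk j + X) * cauchyT ww p (zk j + X)) / tpi) * E (zk j))
      - R21 (zk j) * ((zk j - ck) * F11 (zk j)) - R22 (zk j) * ((zk j - ck) * F21 (zk j))) \<longlonglongrightarrow> L2 - 0 - 0"
    by (intro tendsto_diff lhs21_lim conv_small R_lim F11_small F21_small)
  then show ?thesis unfolding eq by simp
qed

end

context slock begin

definition "v1 = F12 ck"
definition "v2 = F22 ck"

lemma LHS12_lim: "(\<lambda>j. ema * (- tpi / complex_of_real h) * (poly (pderiv (map_poly complex_of_real q)) (zk j + X) - (zk j + X) * cpoly q (zk j + X)) * Em (zk j))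
   \<longlonglongrightarrow> ema * (- tpi / complex_of_real h) * (poly (pderiv (map_poly complex_of_real q)) (ck + X) - (ck + X) * cpoly q (ck + X)) * Em ck"
  by (intro tendsto_intros cpoly_tendsto zk_lim E_lim)

lemma small_mult: "(\<lambda>j. (zk j - ck) * f j) \<longlonglongrightarrow> 0" if "f \<longlonglongrightarrow> L" for f :: "nat \<Rightarrow> complex" and L
proof -
  have "(\<lambda>j. (zk j - ck) * f j) \<longlonglongrightarrow> (ck - ck) * L" by (intro tendsto_intros zk_lim that)
  then show ?thesis by simp
qed

lemma kern: "a k * (b k * v1 + y * v2) = 0"
proof -
  define LHS where "LHS j = ema * (- tpi / complex_of_real h) * (poly (pderiv (map_poly complex_of_real q)) (zk j + X) - (zk j + X) * cpoly q (zk j + X)) * Em (zk j)" for j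
  have eq: "(zk j - ck) * LHS j = a k * b k * F12 (zk j) + a k * y * F22 (zk j) + R11 (zk j) * ((zk j - ck) * F12 (zk j)) + R12 (zk j) * ((zk j - ck) * F22 (zk j))" for j
  proof -
    have "(zk j - ck) * LHS j = ((zk j - ck) * A11 (zk j)) * F12 (zk j) + ((zk j - ck) * A12 (zk j)) * F22 (zk j)"
      unfolding LHS_def eq12[OF zk_nz] by (simp add: algebra_simps)
    then show ?thesis unfolding A_split[OF zk_ne] by (simp add: algebra_simps)
  qed
  have l1: "(\<lambda>j. (zk j - ck) * LHS j) \<longlonglongrightarrow> 0" unfolding LHS_def by (rule small_mult[OF LHS12_lim])
  have l2: "(\<lambda>j. a k * b k * F12 (zk j) + a k * y * F22 (zk j) + R11 (zk j) * ((zk j - ck) * F12 (zk j)) + R12 (zk j) * ((zk j - ck) * F22 (zk j)))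
     \<longlonglongrightarrow> a k * b k * v1 + a k * y * v2 + 0 + 0"
    unfolding v1_def v2_def
    by (intro tendsto_add tendsto_mult tendsto_const F12_lim F22_lim conv_small[OF R_lim(1) small_mult[OF F12_lim]]
        conv_small[OF R_lim(2) small_mult[OF F22_lim]])
  have "a k * b k * v1 + a k * y * v2 + 0 + 0 = 0" using LIMSEQ_unique[OF l2] l1 unfolding eq by blast
  then show ?thesis by (simp add: algebra_simps)
qed

lemma dq_lim: assumes "(f has_field_derivative D) (at ck)"
  shows "(\<lambda>j. (f (zk j) - f ck) / (zk j - ck)) \<longlonglongrightarrow> D"
proof -
  have "((\<lambda>h. (f (ck + h) - f ck) / h) \<longlongrightarrow> D) (at 0)" using assms unfolding DERIV_def .
  moreover have "(\<lambda>j. zk j - ck) \<longlonglongrightarrow> 0" using tendsto_diff[OF zk_lim tendsto_const, of ck] by simp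
  moreover have "\<forall>i. zk i - ck \<in> UNIV - {0}" using zk_ne by simp
  ultimately have "((\<lambda>h. (f (ck + h) - f ck) / h) \<circ> (\<lambda>j. zk j - ck)) \<longlonglongrightarrow> D"
    unfolding tendsto_at_iff_sequentially by (metis (no_types, lifting))
  then show ?thesis by (simp add: comp_def)
qed

lemma F22_deriv: "(F22 has_field_derivative (ea * poly (pderiv (map_poly complex_of_real p)) (z + X)) * Em z + (- (Em z * (z + X))) * (ea * cpoly p (z + X))) (at z)"
  unfolding F22_def[abs_def] by (rule DERIV_mult[OF DERIV_cmult[OF cpoly_chain] Em_deriv])

lemma F12_deriv: "(F12 has_field_derivative ema * (- tpi / complex_of_real h * poly (pderiv (map_poly complex_of_real q)) (z + X)) * Em z + (- (Em z * (z + X))) * (ema * (- tpi / complex_of_real h * cpoly q (z + X)))) (at z)"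
  unfolding F12_def[abs_def] by (rule DERIV_mult[OF DERIV_cmult[OF DERIV_cmult[OF cpoly_chain]] Em_deriv])

lemma det_small: "(\<lambda>j. F11 (zk j) * (F22 (zk j) - v2) - F21 (zk j) * (F12 (zk j) - v1)) \<longlonglongrightarrow> 0"
proof -
  have eq: "F11 (zk j) * (F22 (zk j) - v2) - F21 (zk j) * (F12 (zk j) - v1) =
     ((zk j - ck) * F11 (zk j)) * ((F22 (zk j) - F22 ck) / (zk j - ck)) - ((zk j - ck) * F21 (zk j)) * ((F12 (zk j) - F12 ck) / (zk j - ck))" for j
  proof -
    have u: "u \<noteq> 0 \<Longrightarrow> (u * A) * (B / u) = A * B" for u A B :: complex by simp
    have nz: "zk j - ck \<noteq> 0" using zk_ne[of j] by simp
    show ?thesis unfolding v1_def v2_def u[OF nz] ..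
  qed
  from tendsto_diff[OF tendsto_mult[OF F11_small dq_lim[OF F22_deriv]] tendsto_mult[OF F21_small dq_lim[OF F12_deriv]]]
  show ?thesis unfolding eq by simp
qed

lemma main_k: "a k = - v1 * L1 / y \<and> a k * b k = v1 * L2 \<and> (a k = 0 \<longrightarrow> L1 = 0 \<and> L2 = 0)"
proof (cases "a k = 0")
  case True
  have "(\<lambda>j. a k * S j) \<longlonglongrightarrow> 0" using True by simp
  then have L1: "L1 = 0" using LIMSEQ_unique[OF aS_lim] by blast
  have "(\<lambda>j. - (a k * b k / y) * S j) \<longlonglongrightarrow> 0" using True by simp
  then have L2: "L2 = 0" using LIMSEQ_unique[OF bS_lim] by blast
  show ?thesis using True L1 L2 by simp
next
  case False
  then have bv: "b k * v1 = - (y * v2)" using kern by (simp add: eq_neg_iff_add_eq_0)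
  have vS: "v1 * S j = - y * (F11 (zk j) * F22 (zk j) - F12 (zk j) * F21 (zk j)) + y * (F11 (zk j) * (F22 (zk j) - v2) - F21 (zk j) * (F12 (zk j) - v1))" for j
  proof -
    have "v1 * S j = (b k * v1) * F11 (zk j) + y * v1 * F21 (zk j)" unfolding S_def by (simp add: algebra_simps)
    also have "\<dots> = - (y * v2) * F11 (zk j) + y * v1 * F21 (zk j)" unfolding bv ..
    finally show ?thesis by (simp add: algebra_simps)
  qed
  have vS_lim: "(\<lambda>j. v1 * S j) \<longlonglongrightarrow> - y"
  proof -
    have "(\<lambda>j. - y * (F11 (zk j) * F22 (zk j) - F12 (zk j) * F21 (zk j)) + y * (F11 (zk j) * (F22 (zk j) - v2) - F21 (zk j) * (F12 (zk j) - v1)))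
       \<longlonglongrightarrow> - y * 1 + y * 0"
      using det_one[OF zk_pos] by (intro tendsto_intros det_small) simp
    then show ?thesis unfolding vS by simp
  qed
  have "(\<lambda>j. a k * (v1 * S j)) \<longlonglongrightarrow> a k * (- y)" by (intro tendsto_intros vS_lim)
  moreover have "(\<lambda>j. a k * (v1 * S j)) \<longlonglongrightarrow> v1 * L1"
    using tendsto_mult[OF tendsto_const aS_lim, of v1] by (simp add: algebra_simps)
  ultimately have 1: "a k * (- y) = v1 * L1" using LIMSEQ_unique by blast
  have "(\<lambda>j. - (a k * b k / y) * (v1 * S j)) \<longlonglongrightarrow> - (a k * b k / y) * (- y)" by (intro tendsto_intros vS_lim)
  moreover have "(\<lambda>j. - (a k * b k / y) * (v1 * S j)) \<longlonglongrightarrow> v1 * L2"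
    using tendsto_mult[OF tendsto_const bS_lim, of v1] by (simp add: algebra_simps)
  ultimately have 2: "- (a k * b k / y) * (- y) = v1 * L2" using LIMSEQ_unique by blast
  have "a k * y = - (v1 * L1)"
  proof -
    have "a k * y = - (a k * (- y))" by simp
    also have "\<dots> = - (v1 * L1)" unfolding 1 ..
    finally show ?thesis .
  qed
  then have "a k = - (v1 * L1) / y" using ynz by (metis nonzero_mult_div_cancel_right)
  then have a1: "a k = - v1 * L1 / y" by simp
  have a2: "a k * b k = v1 * L2" using 2 ynz by simp
  show ?thesis using a1 a2 False by simp
qed

end

context slock begin

definition "G0 = exp (- t\<^sup>2)"

lemma RR_n: "RR m c wh x n k = J * G0 * (poly p t)\<^sup>2 / hN"
  unfolding RR_def Let_def J_def G0_def p_def hN_def t_def ..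
lemma RR_n1: "RR m c wh x (n - 1) k = J * G0 * (poly q t)\<^sup>2 / h"
  unfolding RR_def Let_def J_def G0_def q_def h_def t_def ..
lemma rr_n: "rr m c wh x n k = J * G0 * poly p t * poly q t / h"
  unfolding rr_def Let_def J_def G0_def p_def q_def h_def t_def ..

lemma Eck: "E ck = complex_of_real (exp (t\<^sup>2 / 2))" and Emck: "Em ck = complex_of_real (inverse (exp (t\<^sup>2 / 2)))"
  unfolding E_def Em_def ckX by (simp_all add: exp_of_real[symmetric] exp_minus[symmetric])

lemma ema_inv: "ema = complex_of_real (inverse (exp (x\<^sup>2 / 2)))"
  unfolding ema_def by (simp add: exp_minus)

lemma expt: "exp (- t\<^sup>2) = inverse (exp (t\<^sup>2 / 2)) * inverse (exp (t\<^sup>2 / 2))"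
  by (simp add: exp_minus[symmetric] exp_add[symmetric])

lemma v1_val: "v1 = complex_of_real (inverse (exp (x\<^sup>2 / 2))) * (- tpi / complex_of_real h * complex_of_real (poly q t)) * complex_of_real (inverse (exp (t\<^sup>2 / 2)))"
  unfolding v1_def F12_def ckX cpoly_of_real ema_inv[symmetric] Emck[symmetric] ckX ..

lemma a_val: "a k = complex_of_real (RR m c wh x (n - 1) k / 2)"
proof -
  have "a k = - v1 * L1 / y" using main_k by blast
  also have "\<dots> = complex_of_real (J * G0 * (poly q t)\<^sup>2 / h / 2)"
    unfolding v1_val L1_def y_val Eck ema_inv ea_def tpi_def G0_def expt using h_pos
    by (simp add: field_simps power2_eq_square)
  finally show ?thesis unfolding RR_n1 by simp
qed

lemma ab_val: "a k * b k = complex_of_real (rr m c wh x n k)"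
proof -
  have "a k * b k = v1 * L2" using main_k by blast
  also have "\<dots> = complex_of_real (J * G0 * poly p t * poly q t / h)"
    unfolding v1_val L2_def Eck ema_inv ea_def tpi_def G0_def expt using h_pos
    by (simp add: field_simps power2_eq_square)
  finally show ?thesis unfolding rr_n .
qed

lemma zero_val: "a k = 0 \<Longrightarrow> RR m c wh x n k = 0"
proof -
  assume "a k = 0"
  then have "L2 = 0" using main_k by blast
  then have "J * (poly p t * exp (- t\<^sup>2)) = 0"
    unfolding L2_def Eck ea_def tpi_def by simp
  then show ?thesis unfolding RR_n G0_def by (auto simp: power2_eq_square)
qed

end

theorem theorem5p4:
  fixes m n :: nat and c wh :: "nat \<Rightarrow> real"
    and y :: "real \<Rightarrow> complex" and a b :: "real \<Rightarrow> nat \<Rightarrow> complex"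
    and x :: real and k :: nat
  assumes m: "m \<ge> 1" and n: "n \<ge> 1"
    and c1: "c 1 = 0"
    and cmono: "\<And>i j. 1 \<le> i \<Longrightarrow> i < j \<Longrightarrow> j \<le> m \<Longrightarrow> c i < c j"
    and wh0: "wh 0 = 1"
    and whpos: "\<And>i. 1 \<le> i \<Longrightarrow> i \<le> m \<Longrightarrow> wh i \<ge> 0"
    and ynz: "\<And>x. y x \<noteq> 0"
    and lax: "\<And>x z. Im z \<noteq> 0 \<Longrightarrow> \<forall>i j.
        ((\<lambda>\<zeta>. Phi m c wh n \<zeta> x $ i $ j) has_field_derivative
           (Alax m c n (y x) (a x) (b x) z x ** Phi m c wh n z x) $ i $ j) (at z)"
    and k: "1 \<le> k" "k \<le> m"
  shows "complex_of_real (RR m c wh x n k) =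
           a x k * (b x k)\<^sup>2 / ((\<Sum>j=1..m. a x j * b x j) + of_nat n) \<and>
         complex_of_real (rr m c wh x n k) = a x k * b x k \<and>
         (RR m c wh x n k \<noteq> 0 \<and> rr m c wh x n k \<noteq> 0 \<and>
           (\<Sum>j=1..m. rr m c wh x n j) + real n \<noteq> 0 \<longrightarrow>
         a x k = complex_of_real ((rr m c wh x n k)\<^sup>2 /
                   (RR m c wh x n k * ((\<Sum>j=1..m. rr m c wh x n j) + real n))) \<and>
         b x k = complex_of_real (RR m c wh x n k / rr m c wh x n k *
                   ((\<Sum>j=1..m. rr m c wh x n j) + real n))) \<and>
         a x k = complex_of_real (RR m c wh x (n - 1) k / 2)"
proof -
  interpret S: sloc m c wh x n "y x" "a x" "b x"
    by unfold_locales (use m n c1 cmono wh0 whpos ynz lax in auto)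
  have per: "a x j = complex_of_real (RR m c wh x (n - 1) j / 2) \<and> a x j * b x j = complex_of_real (rr m c wh x n j)
      \<and> (a x j = 0 \<longrightarrow> RR m c wh x n j = 0)" if "1 \<le> j" "j \<le> m" for j
  proof -
    interpret K: slock m c wh x n "y x" "a x" "b x" j by unfold_locales (use that in auto)
    show ?thesis using K.a_val K.ab_val K.zero_val by blast
  qed
  define R where "R = RR m c wh x n k"
  define R1 where "R1 = RR m c wh x (n - 1) k"
  define r where "r = rr m c wh x n k"
  define Sr where "Sr = (\<Sum>j=1..m. rr m c wh x n j) + real n"
  have sum_ab: "(\<Sum>j=1..m. a x j * b x j) = complex_of_real (\<Sum>j=1..m. rr m c wh x n j)"
    using per by (simp add: of_real_sum)
  have Sr_val: "Sr = 2 * S.hN / S.h"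
  proof -
    have "complex_of_real Sr = complex_of_real (2 * S.hN / S.h)"
      using S.SA_val unfolding S.SA_def sum_ab Sr_def by simp
    then show ?thesis by (simp only: of_real_eq_iff)
  qed
  have Sab: "(\<Sum>j=1..m. a x j * b x j) + of_nat n = complex_of_real Sr"
    unfolding sum_ab Sr_def by simp
  interpret K: slock m c wh x n "y x" "a x" "b x" k by unfold_locales (use k in auto)
  have a_k: "a x k = complex_of_real (R1 / 2)" unfolding R1_def using K.a_val .
  have ab_k: "a x k * b x k = complex_of_real r" unfolding r_def using K.ab_val .
  have RRv: "R = K.J * K.G0 * (poly S.p K.t)\<^sup>2 / S.hN" unfolding R_def by (rule K.RR_n)
  have R1v: "R1 = K.J * K.G0 * (poly S.q K.t)\<^sup>2 / S.h" unfolding R1_def by (rule K.RR_n1)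
  have rv: "r = K.J * K.G0 * poly S.p K.t * poly S.q K.t / S.h" unfolding r_def by (rule K.rr_n)
  have hpos: "0 < S.h" "0 < S.hN" by (rule S.h_pos, rule S.hN_pos)
  have c1: "complex_of_real R = a x k * (b x k)\<^sup>2 / ((\<Sum>j=1..m. a x j * b x j) + of_nat n)"
  proof (cases "a x k = 0")
    case True
    then show ?thesis using K.zero_val unfolding R_def by simp
  next
    case False
    then have R1nz: "R1 \<noteq> 0" using a_k by auto
    have "a x k * (b x k)\<^sup>2 = (a x k * b x k)^2 / a x k" using False by (simp add: power2_eq_square)
    also have "\<dots> = (complex_of_real r)^2 / a x k" unfolding ab_k ..
    also have "\<dots> = complex_of_real (r^2 / (R1 / 2))" unfolding a_k by simp
    finally have A: "a x k * (b x k)\<^sup>2 / ((\<Sum>j=1..m. a x j * b x j) + of_nat n) = complex_of_real (r^2 / (R1 / 2) / Sr)"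
      unfolding Sab by (simp only: of_real_divide)
    have B: "r^2 / (R1 / 2) / Sr = R"
      using R1nz hpos unfolding Sr_val RRv R1v rv by (simp add: field_simps power2_eq_square)
    show ?thesis by (simp only: A B)
  qed
  have c3: "a x k = complex_of_real (r\<^sup>2 / (R * Sr)) \<and> b x k = complex_of_real (R / r * Sr)"
    if "R \<noteq> 0" "r \<noteq> 0" "Sr \<noteq> 0"
  proof -
    have anz: "a x k \<noteq> 0" using ab_k that(2) by auto
    then have R1nz: "R1 \<noteq> 0" using a_k by auto
    have 1: "r\<^sup>2 / (R * Sr) = R1 / 2"
      using that R1nz hpos unfolding Sr_val RRv R1v rv by (simp add: field_simps power2_eq_square)
    have "b x k = (a x k * b x k) / a x k" using anz by simp
    also have "\<dots> = complex_of_real r / a x k" unfolding ab_k ..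
    also have "\<dots> = complex_of_real (r / (R1 / 2))" unfolding a_k by simp
    finally have bk: "b x k = complex_of_real (r / (R1 / 2))" .
    have 2: "R / r * Sr = r / (R1 / 2)"
      using that R1nz hpos unfolding Sr_val RRv R1v rv by (simp add: field_simps power2_eq_square)
    show ?thesis unfolding 1 2 using a_k bk by simp
  qed
  have c1': "complex_of_real (RR m c wh x n k) = a x k * (b x k)\<^sup>2 / ((\<Sum>j=1..m. a x j * b x j) + of_nat n)"
    using c1 unfolding R_def .
  have c2': "complex_of_real (rr m c wh x n k) = a x k * b x k" using ab_k unfolding r_def by simp
  have c3': "RR m c wh x n k \<noteq> 0 \<and> rr m c wh x n k \<noteq> 0 \<and> (\<Sum>j=1..m. rr m c wh x n j) + real n \<noteq> 0 \<longrightarrow>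
         a x k = complex_of_real ((rr m c wh x n k)\<^sup>2 / (RR m c wh x n k * ((\<Sum>j=1..m. rr m c wh x n j) + real n))) \<and>
         b x k = complex_of_real (RR m c wh x n k / rr m c wh x n k * ((\<Sum>j=1..m. rr m c wh x n j) + real n))"
    using c3 unfolding R_def r_def Sr_def by blast
  have c4': "a x k = complex_of_real (RR m c wh x (n - 1) k / 2)" using a_k unfolding R1_def .
  show ?thesis using c1' c2' c3' c4' by blast
qed


end
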